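(* Let $N\ge1$, $a\in\{-1/2,1/2\}$, $E,\varphi\in C^1[-1,1]$, and $\tilde E=E\varphi$. Then for every $\lambda\in\mathbb{J}_N$, \[\frac{\tilde P_{N,a}(\lambda)}{\dim_{SO(2N+1/2+a)}\lambda}=\sum_{\mu\in\mathbb{J}_N}\det[I^\varphi_a(\mu_i-i+N,\lambda_j-j+N)]_{1\le i,j\le N}\frac{P_{N,a}(\mu)}{\dim_{SO(2N+1/2+a)}\mu}.\]
   Context: $\mathsf{J}^{(-1/2,-1/2)}_s(\cos\theta)=\cos s\theta$, $\mathsf{J}^{(1/2,-1/2)}_s(\cos\theta)=\sin((s+\frac12)\theta)/\sin(\theta/2)$; $W^{(-1/2,-1/2)}(0)=1$, $W^{(-1/2,-1/2)}(s)=2$ ($s>0$), $W^{(1/2,-1/2)}\equiv1$. $\mathbb{J}_N$: integer sequences $\lambda_1\ge\dots\ge\lambda_N\ge0$. $SO(2N+1/2+a)$ means $SO(2N+1)$ for $a=\frac12$ and $SO(2N)$ for $a=-\frac12$; $\dim_{SO(2N+1)}\lambda=\prod_{i<j}\frac{l_i^2-l_j^2}{m_i^2-m_j^2}\prod_i\frac{l_i}{m_i}$ ($l_i=\lambda_i+N-i+\frac12$, $m_i=N-i+\frac12$), $\dim_{SO(2N)}\lambda=\prod_{i<j}\frac{l_i^2-l_j^2}{m_i^2-m_j^2}$ ($l_i=\lambda_i+N-i$, $m_i=N-i$). For $F\in C^1[-1,1]$ put $f_j^{(N,a)}[F](k)=\frac{W^{(a,-1/2)}(k)}{\pi}\int_{-1}^1x^{N-j}F(x)\mathsf{J}^{(a,-1/2)}_k(x)(1-x)^a(1+x)^{-1/2}dx$;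 then $P_{N,a}(\lambda)=C_{N,a}\det[f^{(N,a)}_j[E](\lambda_i-i+N)]\dim_{SO(2N+1/2+a)}\lambda$ and $\tilde P_{N,a}(\lambda)=C_{N,a}\det[f^{(N,a)}_j[\tilde E](\lambda_i-i+N)]\dim_{SO(2N+1/2+a)}\lambda$, with $C_{N,1/2}=2^{N(N-1)/2}$, $C_{N,-1/2}=2^{(N-1)(N-2)/2}$. $I^\varphi_a(l,i)=\frac{W^{(a,-1/2)}(i)}{\pi}\int_{-1}^1\mathsf{J}^{(a,-1/2)}_i(x)\mathsf{J}^{(a,-1/2)}_l(x)\varphi(x)(1-x)^a(1+x)^{-1/2}dx$. *)

theory Defs
  imports "HOL-Analysis.Analysis"
begin

definition C1_on :: "real set \<Rightarrow> (real \<Rightarrow> real) \<Rightarrow> bool" where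
  "C1_on S F \<longleftrightarrow> (\<exists>F'. continuous_on S F' \<and>
      (\<forall>x\<in>S. (F has_real_derivative F' x) (at x within S)))"

text \<open>Jacobi polynomials J^{(a,-1/2)}_s for a = -1/2 and a = 1/2, via x = cos theta.
  For a = 1/2 the value at x = 1 (theta = 0) is the limit 2s+1.\<close>
definition Jac :: "real \<Rightarrow> nat \<Rightarrow> real \<Rightarrow> real" where
  "Jac a s x = (if a = -1/2 then cos (real s * arccos x)
               else if x = 1 then 2 * real s + 1
               else sin ((real s + 1/2) * arccos x) / sin (arccos x / 2))"

definition Wt :: "real \<Rightarrow> nat \<Rightarrow> real" where
  "Wt a s = (if a = -1/2 then (if s = 0 then 1 else 2) else 1)"

definition weight :: "real \<Rightarrow> real \<Rightarrow> real" where
  "weight a x = (1 - x) powr a * (1 + x) powr (-1/2)"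

text \<open>Signatures lambda in J_N, as lists [lambda_1, ..., lambda_N]; lambda_i = lam ! (i - 1).\<close>
definition JN :: "nat \<Rightarrow> nat list set" where
  "JN N = {l. length l = N \<and> sorted_wrt (\<ge>) l}"

definition detN :: "nat \<Rightarrow> (nat \<Rightarrow> nat \<Rightarrow> real) \<Rightarrow> real" where
  "detN N A = (\<Sum>p | p permutes {1..N}. of_int (sign p) * (\<Prod>i=1..N. A i (p i)))"

definition dimSO :: "real \<Rightarrow> nat \<Rightarrow> nat list \<Rightarrow> real" where
  "dimSO a N lam =
    (if a = 1/2 then
       (let l = (\<lambda>i. real (lam ! (i - 1)) + real N - real i + 1/2);
            m = (\<lambda>i. real N - real i + 1/2)
        in (\<Prod>i\<in>{1..N}. \<Prod>j\<in>{i<..N}. (l i ^ 2 - l j ^ 2) / (m i ^ 2 - m j ^ 2))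
           * (\<Prod>i\<in>{1..N}. l i / m i))
     else
       (let l = (\<lambda>i. real (lam ! (i - 1)) + real N - real i);
            m = (\<lambda>i. real N - real i)
        in (\<Prod>i\<in>{1..N}. \<Prod>j\<in>{i<..N}. (l i ^ 2 - l j ^ 2) / (m i ^ 2 - m j ^ 2))))"

definition fcoef :: "real \<Rightarrow> nat \<Rightarrow> nat \<Rightarrow> (real \<Rightarrow> real) \<Rightarrow> nat \<Rightarrow> real" where
  "fcoef a N j F k = Wt a k / pi *
     (LINT x:{-1..1}|lborel. x ^ (N - j) * F x * Jac a k x * weight a x)"

definition CNa :: "real \<Rightarrow> nat \<Rightarrow> real" where
  "CNa a N = (if a = 1/2 then 2 ^ (N * (N - 1) div 2) else 2 ^ ((N - 1) * (N - 2) div 2))"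

definition PNa :: "real \<Rightarrow> nat \<Rightarrow> (real \<Rightarrow> real) \<Rightarrow> nat list \<Rightarrow> real" where
  "PNa a N E lam = CNa a N * detN N (\<lambda>i j. fcoef a N j E (lam ! (i - 1) + N - i)) * dimSO a N lam"

definition PtildeNa :: "real \<Rightarrow> nat \<Rightarrow> (real \<Rightarrow> real) \<Rightarrow> (real \<Rightarrow> real) \<Rightarrow> nat list \<Rightarrow> real" where
  "PtildeNa a N E \<phi> lam = PNa a N (\<lambda>x. E x * \<phi> x) lam"

definition Icoef :: "real \<Rightarrow> (real \<Rightarrow> real) \<Rightarrow> nat \<Rightarrow> nat \<Rightarrow> real" where
  "Icoef a \<phi> l i = Wt a i / pi *
     (LINT x:{-1..1}|lborel. Jac a i x * Jac a l x * \<phi> x * weight a x)"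

end

theory Submission
  imports Defs
begin


fun Pj :: "real \<Rightarrow> nat \<Rightarrow> real \<Rightarrow> real" where
  "Pj a 0 x = 1"
| "Pj a (Suc 0) x = (if a = -1/2 then x else 2*x+1)"
| "Pj a (Suc (Suc n)) x = 2*x*Pj a (Suc n) x - Pj a n x"

lemma cos_rec: "cos (y + t::real) = 2 * cos t * cos y - cos (y - t)"
  by (simp add: cos_add cos_diff)

lemma sin_rec: "sin (y + t::real) = 2 * cos t * sin y - sin (y - t)"
  by (simp add: sin_add sin_diff)

lemma Pj_cos_m0: "x = cos t \<Longrightarrow> a = -1/2 \<Longrightarrow> Pj a n x = cos (real n * t)"
proof (induction a n x rule: Pj.induct)
  case (3 a n)
  have "cos (real (Suc (Suc n)) * t) = cos ((real (Suc n)) * t + t)"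
    by (simp add: algebra_simps)
  also have "\<dots> = 2 * cos t * cos (real (Suc n) * t) - cos (real n * t)"
    by (subst cos_rec) (simp add: algebra_simps)
  finally show ?case using 3 by simp
qed auto

lemma Pj_cos_m: "a = -1/2 \<Longrightarrow> Pj a n (cos t) = cos (real n * t)"
  using Pj_cos_m0 by blast

lemma Pj_cos_p0: "x = cos t \<Longrightarrow> a \<noteq> -1/2 \<Longrightarrow> Pj a n x * sin (t/2) = sin ((real n + 1/2) * t)"
proof (induction a n x rule: Pj.induct)
  case (2 a)
  have "sin ((1 + 1/2) * t) = sin (t/2 + t)" by (simp add: algebra_simps)
  also have "\<dots> = 2 * cos t * sin (t/2) - sin (t/2 - t)" by (rule sin_rec)
  also have "sin (t/2 - t) = - sin (t/2)" by (simp add: sin_diff)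
  finally show ?case using 2 by (simp add: algebra_simps)
next
  case (3 a n)
  have "sin ((real (Suc (Suc n)) + 1/2) * t) = sin ((real (Suc n) + 1/2) * t + t)"
    by (simp add: algebra_simps)
  also have "\<dots> = 2 * cos t * sin ((real (Suc n) + 1/2) * t) - sin ((real n + 1/2) * t)"
    by (subst sin_rec) (simp add: algebra_simps)
  finally show ?case using 3 by (simp add: algebra_simps)
qed auto

lemma Pj_cos_p: "a \<noteq> -1/2 \<Longrightarrow> Pj a n (cos t) * sin (t/2) = sin ((real n + 1/2) * t)"
  using Pj_cos_p0 by blast

lemma Pj_one: "Pj a n 1 = (if a = -1/2 then 1 else 2 * real n + 1)"
proof -
  have "Pj a n 1 = (if a = -1/2 then 1 else 2 * real n + 1) \<and>
        Pj a (Suc n) 1 = (if a = -1/2 then 1 else 2 * real (Suc n) + 1)"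
    by (induction n) (auto simp: algebra_simps)
  thus ?thesis by simp
qed

lemma continuous_Pj2: "continuous_on S (Pj a n) \<and> continuous_on S (Pj a (Suc n))"
  by (induction n) (cases "a = -1/2"; auto intro!: continuous_intros)+

lemma continuous_Pj: "continuous_on S (Pj a n)"
  using continuous_Pj2 by blast

lemma Jac_eq_Pj:
  assumes "x \<in> {-1..1}"
  shows "Jac a n x = Pj a n x"
proof (cases "a = -1/2")
  case True
  then show ?thesis using assms Pj_cos_m[OF True, of n "arccos x"]
    by (simp add: Jac_def cos_arccos)
next
  case False
  show ?thesis
  proof (cases "x = 1")
    case True thus ?thesis using False by (simp add: Jac_def Pj_one)
  next
    case x1: False
    define t where "t = arccos x"
    have cx: "cos t = x" "0 \<le> t" "t \<le> pi" using assms unfolding t_def by (auto simp: arccos)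
    have t: "0 < t" "t \<le> pi" using cx x1 by (auto simp: order.order_iff_strict)
    have "sin (t/2) > 0" using t by (intro sin_gt_zero) auto
    moreover have "cos t = x" using assms unfolding t_def by (simp add: cos_arccos)
    ultimately show ?thesis using Pj_cos_p[OF False, of n t] False x1
      by (simp add: Jac_def t_def[symmetric] field_simps)
  qed
qed

lemma continuous_Jac: "continuous_on {-1..1} (Jac a n)"
  by (rule continuous_on_eq[OF continuous_Pj]) (simp add: Jac_eq_Pj)


definition rho :: "real \<Rightarrow> real \<Rightarrow> real" where
  "rho a t = (if a = -1/2 then 1 else 1 - cos t)"

lemma cos_image_0_pi: "cos ` {0..pi} = {-1..1::real}"
proof safe
  fix x :: real assume "x \<in> {-1..1}"
  then show "x \<in> cos ` {0..pi}"
    using arccos_lbound arccos_ubound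
    by (intro image_eqI[where x="arccos x"]) auto
qed auto

lemma inj_on_cos_0_pi: "inj_on cos {0..pi}"
  by (rule inj_on_inverseI[where g=arccos]) (auto intro: arccos_cos)

lemma aux_w1: "c < 1 \<Longrightarrow> c > -1 \<Longrightarrow> sqrt ((1 - c) * (1 + c)) = s \<Longrightarrow> 
   s * sqrt (1 - c) / sqrt (1 + c) = s * s / (1 + (c::real))"
proof -
  assume c: "c < 1" "c > -1" and sq: "sqrt ((1 - c) * (1 + c)) = s"
  have p: "sqrt (1 + c) > 0" using c by simp
  have "sqrt (1 - c) * sqrt (1 + c) = s" using sq by (simp add: real_sqrt_mult)
  then have "sqrt (1 - c) = s / sqrt (1 + c)" using p by (simp add: field_simps)
  then have "s * sqrt (1 - c) / sqrt (1 + c) = s * s / (sqrt (1 + c) * sqrt (1 + c))" by simp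
  also have "sqrt (1 + c) * sqrt (1 + c) = 1 + c" using c by simp
  finally show ?thesis .
qed

lemma aux_w2: "c < 1 \<Longrightarrow> c > -1 \<Longrightarrow> sqrt ((1 - c) * (1 + c)) = s \<Longrightarrow> s > 0 \<Longrightarrow>
    s * (inverse (sqrt (1 - c)) * inverse (sqrt (1 + c))) = (1::real)"
proof -
  assume c: "c < 1" "c > -1" and sq: "sqrt ((1 - c) * (1 + c)) = s" and s: "s > 0"
  have "sqrt (1 - c) * sqrt (1 + c) = s" using sq by (simp add: real_sqrt_mult)
  then have "inverse (sqrt (1 - c)) * inverse (sqrt (1 + c)) = inverse s"
    by (metis inverse_mult_distrib)
  then show ?thesis using s by simp
qed

lemma weight_cos:
  assumes a: "a = 1/2 \<or> a = -1/2" and t: "0 < t" "t < pi"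
  shows "\<bar>- sin t\<bar> * weight a (cos t) = rho a t"
proof -
  have s: "sin t > 0" using t by (intro sin_gt_zero) auto
  have c: "cos t < 1" "cos t > -1" using t cos_monotone_0_pi[of 0 t] cos_monotone_0_pi[of t pi] by auto
  have ss: "sin t ^ 2 = (1 - cos t) * (1 + cos t)" by (simp add: sin_squared_eq algebra_simps power2_eq_square)
  have sq: "sqrt ((1 - cos t) * (1 + cos t)) = sin t"
  proof -
    have "sqrt ((1 - cos t) * (1 + cos t)) = sqrt (sin t ^ 2)" using ss by simp
    also have "\<dots> = sin t" using s by simp
    finally show ?thesis .
  qed
  have p1: "x powr (-1/2) = inverse (sqrt x)" if "x > 0" for x :: real
  proof -
    have "x powr (-1/2) = x powr (- (1/2))" by simp
    also have "\<dots> = inverse (x powr (1/2))" by (rule powr_minus)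
    also have "\<dots> = inverse (sqrt x)" using that by (simp add: powr_half_sqrt)
    finally show ?thesis .
  qed
  have p2: "x powr (1/2) = sqrt x" if "x > 0" for x :: real
    using that by (simp add: powr_half_sqrt)
  have w: "weight a (cos t) = (1 - cos t) powr a * inverse (sqrt (1 + cos t))"
    unfolding weight_def using p1[of "1 + cos t"] c by simp
  from a show ?thesis
  proof
    assume a: "a = 1/2"
    have "(1 - cos t) powr a = sqrt (1 - cos t)" using p2[of "1 - cos t"] c unfolding a by simp
    then have "\<bar>- sin t\<bar> * weight a (cos t) = sin t * sqrt (1 - cos t) / sqrt (1 + cos t)"
      using w s by (simp add: divide_inverse)
    also have "\<dots> = sin t * sin t / (1 + cos t)"
      by (rule aux_w1[OF c sq])
    also have "\<dots> = 1 - cos t" using ss c by (simp add: power2_eq_square)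
    finally show ?thesis by (simp add: rho_def a)
  next
    assume a: "a = -1/2"
    have "(1 - cos t) powr a = inverse (sqrt (1 - cos t))" using p1[of "1 - cos t"] c unfolding a by simp
    then have "\<bar>- sin t\<bar> * weight a (cos t) = sin t * (inverse (sqrt (1 - cos t)) * inverse (sqrt (1 + cos t)))"
      using w s by simp
    also have "\<dots> = 1" by (rule aux_w2[OF c sq s])
    finally show ?thesis by (simp add: rho_def a)
  qed
qed

lemma measurable_weight[measurable]: "weight a \<in> borel_measurable borel"
  unfolding weight_def by measurable

lemma subst_lemma:
  assumes a: "a = 1/2 \<or> a = -1/2" and G: "continuous_on {-1..1} G"
  shows "set_integrable lborel {-1..1} (\<lambda>x. G x * weight a x)"
    "(LINT x:{-1..1}|lborel. G x * weight a x) = integral {0..pi} (\<lambda>t. G (cos t) * rho a t)"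
proof -
  define f where "f x = G x * weight a x" for x
  define b where "b = integral {0..pi} (\<lambda>t. G (cos t) * rho a t)"
  have c1: "continuous_on {0..pi} (\<lambda>t. G (cos t))"
    by (rule continuous_on_compose2[OF G]) (auto intro: continuous_intros simp: cos_image_0_pi[symmetric])
  have c2: "continuous_on {0..pi} (rho a)"
    unfolding rho_def by (cases "a = -1/2") (auto intro!: continuous_intros)
  have contr: "continuous_on {0..pi} (\<lambda>t. G (cos t) * rho a t)"
    by (intro continuous_intros c1 c2)
  have neg: "negligible {0, pi}" by simp
  have eq: "\<bar>- sin t\<bar> * f (cos t) = G (cos t) * rho a t" if "t \<in> {0..pi} - {0, pi}" for t
    using weight_cos[OF a, of t] that by (auto simp: f_def)
  have "(\<lambda>t. \<bar>- sin t\<bar> * f (cos t)) absolutely_integrable_on {0..pi} \<and>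
        integral {0..pi} (\<lambda>t. \<bar>- sin t\<bar> * f (cos t)) = b"
  proof
    show "(\<lambda>t. \<bar>- sin t\<bar> * f (cos t)) absolutely_integrable_on {0..pi}"
      by (rule absolutely_integrable_spike[OF absolutely_integrable_continuous_real[OF contr] neg eq])
    show "integral {0..pi} (\<lambda>t. \<bar>- sin t\<bar> * f (cos t)) = b"
      unfolding b_def by (rule integral_spike[OF neg eq, symmetric])
  qed
  then have "f absolutely_integrable_on (cos ` {0..pi}) \<and> integral (cos ` {0..pi}) f = b"
    by (subst (asm) has_absolute_integral_change_of_variables_1'[where g'="\<lambda>t. - sin t"])
       (auto intro!: inj_on_cos_0_pi DERIV_cos[THEN has_field_derivative_at_within])
  then have ai: "f absolutely_integrable_on {-1..1}" and ii: "integral {-1..1} f = b"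
    by (auto simp: cos_image_0_pi)
  have meas: "(\<lambda>x. indicator {-1..1} x *\<^sub>R f x) \<in> borel_measurable lborel"
  proof -
    have "(\<lambda>x. indicator {-1..1::real} x *\<^sub>R G x) \<in> borel_measurable borel"
      by (rule borel_measurable_continuous_on_indicator[OF _ G]) auto
    then have "(\<lambda>x. (indicator {-1..1::real} x *\<^sub>R G x) * weight a x) \<in> borel_measurable borel"
      by measurable
    then show ?thesis by (simp add: f_def mult.assoc)
  qed
  have "integrable lborel (\<lambda>x. indicator {-1..1} x *\<^sub>R f x)"
    using ai meas unfolding set_integrable_def by (simp add: integrable_completion)
  then show si: "set_integrable lborel {-1..1} (\<lambda>x. G x * weight a x)"
    unfolding set_integrable_def f_def .
  have "(LINT x:{-1..1}|lborel. f x) = (LINT x:{-1..1}|lebesgue. f x)"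
    unfolding set_lebesgue_integral_def using meas by (simp add: integral_completion)
  also have "\<dots> = integral {-1..1} f" by (rule set_lebesgue_integral_eq_integral(2)[OF ai])
  finally show "(LINT x:{-1..1}|lborel. G x * weight a x) = integral {0..pi} (\<lambda>t. G (cos t) * rho a t)"
    using ii unfolding b_def f_def by simp
qed


lemma int_cos: "((\<lambda>t. cos (real_of_int n * t)) has_integral (if n = 0 then pi else 0)) {0..pi}"
proof (cases "n = 0")
  case True
  then show ?thesis using has_integral_const_real[of "1::real" 0 pi] by simp
next
  case False
  have "((\<lambda>t. cos (real_of_int n * t)) has_integral
         (sin (real_of_int n * pi) / real_of_int n - sin (real_of_int n * 0) / real_of_int n)) {0..pi}"
    using False
    by (intro fundamental_theorem_of_calculus)
       (auto intro!: derivative_eq_intros simp: has_real_derivative_iff_has_vector_derivative[symmetric])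
  moreover have "sin (real_of_int n * pi) = 0" by (simp add: sin_times_pi_eq_0)
  ultimately show ?thesis using False by simp
qed

lemma prod_cos: "cos x * cos y = (cos (x - y) + cos (x + y)) / (2::real)"
  by (simp add: cos_add cos_diff)

lemma prod_sin: "2 * sin x * sin y = cos (x - y) - cos (x + (y::real))"
  by (simp add: cos_add cos_diff)

lemma orth:
  assumes a: "a = 1/2 \<or> a = -1/2"
  shows "((\<lambda>t. Pj a m (cos t) * Pj a k (cos t) * rho a t) has_integral
           (if m = k then pi / Wt a m else 0)) {0..pi}"
proof (cases "a = -1/2")
  case True
  have eq: "Pj a m (cos t) * Pj a k (cos t) * rho a t =
      (cos (real_of_int (int m - int k) * t) + cos (real_of_int (int m + int k) * t)) / 2" for t
  proof -
    have "cos (real m * t) * cos (real k * t) = (cos (real m * t - real k * t) + cos (real m * t + real k * t)) / 2"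
      by (rule prod_cos)
    then show ?thesis using True by (simp add: Pj_cos_m rho_def left_diff_distrib distrib_right)
  qed
  have "((\<lambda>t. (cos (real_of_int (int m - int k) * t) + cos (real_of_int (int m + int k) * t)) / 2)
      has_integral ((if int m - int k = 0 then pi else 0) + (if int m + int k = 0 then pi else 0)) / 2) {0..pi}"
    by (intro has_integral_divide has_integral_add int_cos)
  moreover have "((if int m - int k = 0 then pi else 0) + (if int m + int k = 0 then pi else 0)) / 2
      = (if m = k then pi / Wt a m else 0)"
    using True by (auto simp: Wt_def)
  ultimately show ?thesis unfolding eq by simp
next
  case False
  have eq: "Pj a m (cos t) * Pj a k (cos t) * rho a t =
      cos (real_of_int (int m - int k) * t) - cos (real_of_int (int m + int k + 1) * t)" for t
  proof -
    have "rho a t = 2 * sin (t/2) * sin (t/2)"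
      using False cos_double_sin[of "t/2"] by (simp add: rho_def power2_eq_square)
    then have "Pj a m (cos t) * Pj a k (cos t) * rho a t =
        2 * (Pj a m (cos t) * sin (t/2)) * (Pj a k (cos t) * sin (t/2))" by (simp add: algebra_simps)
    also have "\<dots> = 2 * sin ((real m + 1/2) * t) * sin ((real k + 1/2) * t)"
      using Pj_cos_p[OF False] by simp
    also have "\<dots> = cos ((real m + 1/2) * t - (real k + 1/2) * t) - cos ((real m + 1/2) * t + (real k + 1/2) * t)"
      by (rule prod_sin)
    also have "\<dots> = cos (real_of_int (int m - int k) * t) - cos (real_of_int (int m + int k + 1) * t)"
      by (simp add: algebra_simps)
    finally show ?thesis .
  qed
  have "((\<lambda>t. cos (real_of_int (int m - int k) * t) - cos (real_of_int (int m + int k + 1) * t))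
      has_integral ((if int m - int k = 0 then pi else 0) - (if int m + int k + 1 = 0 then pi else 0))) {0..pi}"
    by (intro has_integral_diff int_cos)
  moreover have "((if int m - int k = 0 then pi else 0) - (if int m + int k + 1 = 0 then pi else 0))
      = (if m = k then pi / Wt a m else 0)"
    using False by (auto simp: Wt_def)
  ultimately show ?thesis unfolding eq by simp
qed


inductive_set spanP :: "real \<Rightarrow> (real \<Rightarrow> real) set" for a where
  basis: "Pj a m \<in> spanP a"
| add: "f \<in> spanP a \<Longrightarrow> g \<in> spanP a \<Longrightarrow> (\<lambda>x. f x + g x) \<in> spanP a"
| scale: "f \<in> spanP a \<Longrightarrow> (\<lambda>x. c * f x) \<in> spanP a"

lemma spanP_cont: "f \<in> spanP a \<Longrightarrow> continuous_on S f"
  by (induction rule: spanP.induct) (auto intro!: continuous_intros continuous_Pj)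

lemma spanP_const: "(\<lambda>x. c) \<in> spanP a"
  using spanP.scale[OF spanP.basis[of a 0], of c] by simp

lemma spanP_diff: "f \<in> spanP a \<Longrightarrow> g \<in> spanP a \<Longrightarrow> (\<lambda>x. f x - g x) \<in> spanP a"
  using spanP.add[of f a "\<lambda>x. (-1) * g x"] spanP.scale[of g a "-1"] by simp

lemma spanP_x: "(\<lambda>x. x) \<in> spanP a"
proof (cases "a = -1/2")
  case True
  have "Pj a 1 = (\<lambda>x. x)" using True by (auto simp: fun_eq_iff)
  then show ?thesis using spanP.basis[of a 1] by simp
next
  case False
  have "(\<lambda>x. (1/2) * ((\<lambda>x. 2*x+1) x - 1)) \<in> spanP a"
    using spanP.scale[OF spanP_diff[OF spanP.basis[of a 1] spanP_const[of 1]], of "1/2"] False by simp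
  then show ?thesis by simp
qed

lemma spanP_x_Pj: "(\<lambda>x. x * Pj a m x) \<in> spanP a"
proof (cases m)
  case 0 then show ?thesis using spanP_x by simp
next
  case (Suc n)
  have "(\<lambda>x. x * Pj a (Suc n) x) = (\<lambda>x. (1/2) * (Pj a (Suc (Suc n)) x + Pj a n x))"
    by (auto simp: algebra_simps)
  also have "\<dots> \<in> spanP a" by (intro spanP.scale spanP.add spanP.basis)
  finally show ?thesis using Suc by simp
qed

lemma spanP_x_mult: "f \<in> spanP a \<Longrightarrow> (\<lambda>x. x * f x) \<in> spanP a"
proof (induction rule: spanP.induct)
  case (basis m) then show ?case by (rule spanP_x_Pj)
next
  case (add f g)
  have "(\<lambda>x. x * f x + x * g x) \<in> spanP a" by (intro spanP.add add.IH)
  then show ?case by (simp add: algebra_simps)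
next
  case (scale f c)
  have "(\<lambda>x. c * (x * f x)) \<in> spanP a" by (intro spanP.scale scale.IH)
  then show ?case by (simp add: algebra_simps)
qed

lemma spanP_mult_Pj: "f \<in> spanP a \<Longrightarrow> (\<lambda>x. f x * Pj a m x) \<in> spanP a \<and> (\<lambda>x. f x * Pj a (Suc m) x) \<in> spanP a"
proof (induction m)
  case 0
  have "(\<lambda>x. f x * Pj a (Suc 0) x) \<in> spanP a"
  proof (cases "a = -1/2")
    case True
    then show ?thesis using spanP_x_mult[OF 0] by (simp add: mult.commute)
  next
    case False
    have "(\<lambda>x. 2 * (x * f x) + f x) \<in> spanP a"
      by (intro spanP.add spanP.scale spanP_x_mult 0)
    then show ?thesis using False by (simp add: algebra_simps)
  qed
  then show ?case using 0 by simp
next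
  case (Suc m)
  have "(\<lambda>x. 2 * (x * (f x * Pj a (Suc m) x)) - f x * Pj a m x) \<in> spanP a"
    using Suc by (intro spanP_diff spanP.scale spanP_x_mult) auto
  then show ?case using Suc by (simp add: algebra_simps)
qed

lemma spanP_mult: "g \<in> spanP a \<Longrightarrow> f \<in> spanP a \<Longrightarrow> (\<lambda>x. f x * g x) \<in> spanP a"
proof (induction g rule: spanP.induct)
  case (basis m) then show ?case using spanP_mult_Pj by blast
next
  case (add g h)
  then have "(\<lambda>x. f x * g x + f x * h x) \<in> spanP a" by (intro spanP.add) auto
  then show ?case by (simp add: algebra_simps)
next
  case (scale g c)
  then have "(\<lambda>x. c * (f x * g x)) \<in> spanP a" by (intro spanP.scale) auto
  then show ?case by (simp add: algebra_simps)
qed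

lemma spanP_approx:
  assumes G: "continuous_on {-1..1} G" and e: "e > 0"
  shows "\<exists>p\<in>spanP a. \<forall>x\<in>{-1..1}. \<bar>G x - p x\<bar> < e"
proof -
  have "\<exists>g. g \<in> spanP a \<and> (\<forall>x\<in>{-1..1}. \<bar>G x - g x\<bar> < e)"
  proof (rule Stone_Weierstrass_HOL[of "{-1..1}" "\<lambda>f. f \<in> spanP a"])
    show "\<exists>f. f \<in> spanP a \<and> f x \<noteq> f y" if "x \<in> {-1..1} \<and> y \<in> {-1..1} \<and> x \<noteq> y" for x y
      using that spanP_x by (intro exI[of _ "\<lambda>x. x"]) auto
  qed (use spanP_const spanP_cont spanP.add spanP_mult G e in auto)
  then show ?thesis by blast
qed

lemma sum_pad: "(\<And>m. m \<ge> K \<Longrightarrow> c m = 0) \<Longrightarrow> K \<le> (n::nat) \<Longrightarrow>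
   (\<Sum>m<n. c m * (f m :: real)) = (\<Sum>m<K. c m * f m)"
  by (rule sum.mono_neutral_right) auto

lemma spanP_repr: "p \<in> spanP a \<Longrightarrow> \<exists>K c. (\<forall>m\<ge>K. c m = 0) \<and> (\<forall>x. p x = (\<Sum>m<K. c m * Pj a m x))"
proof (induction rule: spanP.induct)
  case (basis m)
  show ?case
    by (rule exI[of _ "Suc m"], rule exI[of _ "\<lambda>k. if k = m then 1 else 0"])
       (simp add: sum.delta)
next
  case (add f g)
  then obtain K1 c1 K2 c2 where 1: "\<forall>m\<ge>K1. c1 m = 0" "\<forall>x. f x = (\<Sum>m<K1. c1 m * Pj a m x)"
    and 2: "\<forall>m\<ge>K2. c2 m = 0" "\<forall>x. g x = (\<Sum>m<K2. c2 m * Pj a m x)" by blast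
  define K where "K = max K1 K2"
  have "f x + g x = (\<Sum>m<K. (c1 m + c2 m) * Pj a m x)" for x
  proof -
    have e1: "(\<Sum>m<K. c1 m * Pj a m x) = (\<Sum>m<K1. c1 m * Pj a m x)"
      by (rule sum_pad) (use 1 in \<open>auto simp: K_def\<close>)
    have e2: "(\<Sum>m<K. c2 m * Pj a m x) = (\<Sum>m<K2. c2 m * Pj a m x)"
      by (rule sum_pad) (use 2 in \<open>auto simp: K_def\<close>)
    have "(\<Sum>m<K. (c1 m + c2 m) * Pj a m x) = (\<Sum>m<K. c1 m * Pj a m x) + (\<Sum>m<K. c2 m * Pj a m x)"
      by (simp add: distrib_right sum.distrib)
    then show ?thesis using e1 e2 1(2) 2(2) by metis
  qed
  moreover have "\<forall>m\<ge>K. c1 m + c2 m = 0" using 1 2 by (simp add: K_def)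
  ultimately show ?case by (intro exI[of _ K] exI[of _ "\<lambda>m. c1 m + c2 m"]) auto
next
  case (scale f c)
  then obtain K d where 1: "\<forall>m\<ge>K. d m = 0" "\<forall>x. f x = (\<Sum>m<K. d m * Pj a m x)" by blast
  have "c * f x = (\<Sum>m<K. (c * d m) * Pj a m x)" for x
    using 1(2) by (simp add: sum_distrib_left mult.assoc)
  moreover have "\<forall>m\<ge>K. c * d m = 0" using 1 by simp
  ultimately show ?case by (intro exI[of _ K] exI[of _ "\<lambda>m. c * d m"]) auto
qed


definition ip :: "real \<Rightarrow> (real \<Rightarrow> real) \<Rightarrow> (real \<Rightarrow> real) \<Rightarrow> real" where
  "ip a u v = integral {0..pi} (\<lambda>t. u t * v t * rho a t)"

definition ee :: "real \<Rightarrow> nat \<Rightarrow> real \<Rightarrow> real" where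
  "ee a m t = Pj a m (cos t)"

definition cc :: "real \<Rightarrow> nat \<Rightarrow> real" where
  "cc a m = pi / Wt a m"

lemma cc_pos: "cc a m > 0"
  by (simp add: cc_def Wt_def)

lemma rho_nonneg: "rho a t \<ge> 0"
  by (simp add: rho_def)

lemma cont_rho[continuous_intros]: "continuous_on S (rho a)"
  unfolding rho_def by (cases "a = -1/2") (auto intro!: continuous_intros)

lemma cont_ee[continuous_intros]: "continuous_on S (ee a m)"
  unfolding ee_def by (intro continuous_on_compose2[OF continuous_Pj[of UNIV]] continuous_intros) auto

lemma ip_has_integral:
  assumes "continuous_on {0..pi} u" "continuous_on {0..pi} v"
  shows "((\<lambda>t. u t * v t * rho a t) has_integral ip a u v) {0..pi}"
  unfolding ip_def
  by (intro integrable_integral integrable_continuous_real continuous_intros assms)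

lemma ip_sym: "ip a u v = ip a v u"
  unfolding ip_def by (rule arg_cong[of _ _ "integral {0..pi}"]) (auto simp: fun_eq_iff algebra_simps)

lemma ip_lin_left:
  assumes "finite A" "\<And>m. m \<in> A \<Longrightarrow> continuous_on {0..pi} (f m)" "continuous_on {0..pi} v"
  shows "ip a (\<lambda>t. \<Sum>m\<in>A. c m * f m t) v = (\<Sum>m\<in>A. c m * ip a (f m) v)"
proof -
  have "((\<lambda>t. \<Sum>m\<in>A. c m * (f m t * v t * rho a t)) has_integral (\<Sum>m\<in>A. c m * ip a (f m) v)) {0..pi}"
    using assms by (intro has_integral_sum has_integral_mult_right ip_has_integral) auto
  moreover have "(\<lambda>t. (\<Sum>m\<in>A. c m * f m t) * v t * rho a t) = (\<lambda>t. \<Sum>m\<in>A. c m * (f m t * v t * rho a t))"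
    by (simp add: fun_eq_iff sum_distrib_right mult.assoc)
  ultimately have "((\<lambda>t. (\<Sum>m\<in>A. c m * f m t) * v t * rho a t) has_integral (\<Sum>m\<in>A. c m * ip a (f m) v)) {0..pi}"
    by simp
  then show ?thesis unfolding ip_def by (rule integral_unique)
qed

lemma ip_diff_left:
  assumes "continuous_on {0..pi} x" "continuous_on {0..pi} y" "continuous_on {0..pi} v"
  shows "ip a (\<lambda>t. x t - y t) v = ip a x v - ip a y v"
proof -
  have "((\<lambda>t. x t * v t * rho a t - y t * v t * rho a t) has_integral (ip a x v - ip a y v)) {0..pi}"
    using assms by (intro has_integral_diff ip_has_integral)
  then have "((\<lambda>t. (x t - y t) * v t * rho a t) has_integral (ip a x v - ip a y v)) {0..pi}"
    by (simp add: algebra_simps)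
  then show ?thesis unfolding ip_def by (rule integral_unique)
qed

lemma ip_add_left:
  assumes "continuous_on {0..pi} x" "continuous_on {0..pi} y" "continuous_on {0..pi} v"
  shows "ip a (\<lambda>t. x t + y t) v = ip a x v + ip a y v"
proof -
  have "((\<lambda>t. x t * v t * rho a t + y t * v t * rho a t) has_integral (ip a x v + ip a y v)) {0..pi}"
    using assms by (intro has_integral_add ip_has_integral)
  then have "((\<lambda>t. (x t + y t) * v t * rho a t) has_integral (ip a x v + ip a y v)) {0..pi}"
    by (simp add: algebra_simps)
  then show ?thesis unfolding ip_def by (rule integral_unique)
qed

lemma ip_add_add:
  assumes "continuous_on {0..pi} x" "continuous_on {0..pi} y"
  shows "ip a (\<lambda>t. x t + y t) (\<lambda>t. x t + y t) = ip a x x + 2 * ip a x y + ip a y y"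
proof -
  have "((\<lambda>t. x t * x t * rho a t + 2 * (x t * y t * rho a t) + y t * y t * rho a t) has_integral
        (ip a x x + 2 * ip a x y + ip a y y)) {0..pi}"
    using assms by (intro has_integral_add has_integral_mult_right ip_has_integral)
  then have "((\<lambda>t. (x t + y t) * (x t + y t) * rho a t) has_integral (ip a x x + 2 * ip a x y + ip a y y)) {0..pi}"
    by (simp add: algebra_simps)
  then show ?thesis unfolding ip_def by (rule integral_unique)
qed

lemma ip_nonneg: "ip a u u \<ge> 0"
proof (cases "(\<lambda>t. u t * u t * rho a t) integrable_on {0..pi}")
  case True
  then show ?thesis unfolding ip_def
    by (rule integral_nonneg) (auto intro!: mult_nonneg_nonneg[OF zero_le_square rho_nonneg])
qed (simp add: ip_def not_integrable_integral)

lemma ip_bound: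
  assumes "continuous_on {0..pi} u" "\<And>t. t \<in> {0..pi} \<Longrightarrow> \<bar>u t\<bar> \<le> d"
  shows "ip a u u \<le> d^2 * integral {0..pi} (rho a)"
proof -
  have ri: "(rho a has_integral integral {0..pi} (rho a)) {0..pi}"
    by (intro integrable_integral integrable_continuous_real continuous_intros)
  have "ip a u u \<le> d^2 * integral {0..pi} (rho a)"
  proof (rule has_integral_le[OF ip_has_integral[OF assms(1) assms(1)] has_integral_mult_right[OF ri]])
    fix t assume t: "t \<in> {0..pi}"
    have "u t * u t = \<bar>u t\<bar>^2" by (simp add: power2_eq_square)
    also have "\<dots> \<le> d^2" using assms(2)[OF t] by (intro power_mono) auto
    finally show "u t * u t * rho a t \<le> d^2 * rho a t"
      by (intro mult_right_mono rho_nonneg)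
  qed
  then show ?thesis .
qed

lemma ip_ee: "a = 1/2 \<or> a = -1/2 \<Longrightarrow> ip a (ee a m) (ee a k) = (if m = k then cc a m else 0)"
  unfolding ip_def ee_def cc_def by (rule integral_unique[OF orth])


lemma parseval_norm:
  assumes a: "a = 1/2 \<or> a = -1/2" and uc: "continuous_on {0..pi} u"
    and approx: "\<And>e. e > 0 \<Longrightarrow> \<exists>p\<in>spanP a. \<forall>t\<in>{0..pi}. \<bar>u t - p (cos t)\<bar> \<le> e"
  shows "(\<lambda>m. (ip a u (ee a m))^2 / cc a m) sums ip a u u"
proof -
  define \<alpha> where "\<alpha> m = ip a u (ee a m) / cc a m" for m
  define S where "S n t = (\<Sum>m<n. \<alpha> m * ee a m t)" for n t
  define w where "w n t = u t - S n t" for n t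
  have cS: "continuous_on {0..pi} (S n)" for n unfolding S_def by (intro continuous_intros)
  have cw: "continuous_on {0..pi} (w n)" for n unfolding w_def by (intro continuous_intros uc cS)
  have ce: "continuous_on {0..pi} (ee a m)" for m by (intro continuous_intros)
  have Se: "ip a (S n) (ee a k) = ip a u (ee a k)" if "k < n" for n k
  proof -
    have "ip a (S n) (ee a k) = (\<Sum>m<n. \<alpha> m * ip a (ee a m) (ee a k))"
      unfolding S_def by (rule ip_lin_left) (auto intro: ce)
    also have "\<dots> = (\<Sum>m<n. if m = k then \<alpha> m * cc a m else 0)"
      by (rule sum.cong) (auto simp: ip_ee[OF a])
    also have "\<dots> = \<alpha> k * cc a k" using that by simp
    also have "\<dots> = ip a u (ee a k)" using cc_pos[of a k] by (simp add: \<alpha>_def)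
    finally show ?thesis .
  qed
  have we: "ip a (w n) (ee a k) = 0" if "k < n" for n k
    unfolding w_def using Se[OF that] by (simp add: ip_diff_left uc cS ce)
  have wlin: "ip a (w n) (\<lambda>t. \<Sum>m<n. c m * ee a m t) = 0" for n c
  proof -
    have "ip a (w n) (\<lambda>t. \<Sum>m<n. c m * ee a m t) = ip a (\<lambda>t. \<Sum>m<n. c m * ee a m t) (w n)"
      by (rule ip_sym)
    also have "\<dots> = (\<Sum>m<n. c m * ip a (ee a m) (w n))"
      by (rule ip_lin_left) (auto intro: ce cw)
    also have "\<dots> = 0"
    proof (rule sum.neutral, rule ballI)
      fix m assume "m \<in> {..<n}"
      then have "ip a (ee a m) (w n) = 0" using we[of m n] ip_sym[of a "ee a m" "w n"] by simp
      then show "c m * ip a (ee a m) (w n) = 0" by simp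
    qed
    finally show ?thesis .
  qed
  have wfun: "w n = (\<lambda>t. u t - S n t)" for n by (simp add: fun_eq_iff w_def)
  have ww: "ip a (w n) (w n) = ip a u u - (\<Sum>m<n. \<alpha> m * ip a u (ee a m))" for n
  proof -
    have 1: "ip a (w n) (w n) = ip a u (w n) - ip a (S n) (w n)"
      by (subst (1) wfun) (rule ip_diff_left[OF uc cS cw])
    have 2: "ip a (S n) (w n) = 0" using wlin[of n \<alpha>] ip_sym[of a "S n" "w n"] unfolding S_def by simp
    have 3: "ip a u (w n) = ip a u u - ip a (S n) u"
      using ip_sym[of a u "w n"] ip_diff_left[OF uc cS uc, of a] wfun[of n] by simp
    have 4: "ip a (S n) u = (\<Sum>m<n. \<alpha> m * ip a (ee a m) u)"
      unfolding S_def by (rule ip_lin_left) (auto intro: ce uc)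
    have 5: "ip a (ee a m) u = ip a u (ee a m)" for m by (rule ip_sym)
    show ?thesis using 1 2 3 4 5 by simp
  qed
  have best: "ip a (w n) (w n) \<le> ip a (\<lambda>t. u t - (\<Sum>m<n. \<beta> m * ee a m t)) (\<lambda>t. u t - (\<Sum>m<n. \<beta> m * ee a m t))"
    for n \<beta>
  proof -
    define r where "r t = (\<Sum>m<n. (\<alpha> m - \<beta> m) * ee a m t)" for t
    have cr: "continuous_on {0..pi} r" unfolding r_def by (intro continuous_intros)
    have eq: "(\<lambda>t. u t - (\<Sum>m<n. \<beta> m * ee a m t)) = (\<lambda>t. w n t + r t)"
      by (auto simp: fun_eq_iff w_def S_def r_def left_diff_distrib sum_subtractf)
    have "ip a (\<lambda>t. w n t + r t) (\<lambda>t. w n t + r t) = ip a (w n) (w n) + 2 * ip a (w n) r + ip a r r"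
      by (rule ip_add_add[OF cw cr])
    also have "ip a (w n) r = 0" unfolding r_def by (rule wlin)
    finally show ?thesis using eq ip_nonneg[of a r] by simp
  qed
  define R where "R = integral {0..pi} (rho a)"
  have R: "R \<ge> 0" unfolding R_def by (rule integral_nonneg) (auto intro!: integrable_continuous_real continuous_intros rho_nonneg)
  have part: "(\<Sum>m<n. (ip a u (ee a m))^2 / cc a m) = ip a u u - ip a (w n) (w n)" for n
    by (simp add: ww \<alpha>_def power2_eq_square)
  show ?thesis
    unfolding sums_def
  proof (rule LIMSEQ_I)
    fix e :: real assume e: "e > 0"
    define d where "d = sqrt (e / (R + 1))"
    have d: "d > 0" using e R by (simp add: d_def)
    have dR: "d^2 * R < e"
    proof -
      have "d^2 = e / (R + 1)" using e R by (simp add: d_def)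
      then have "d^2 * R = e * (R / (R + 1))" by simp
      also have "\<dots> < e * 1" using e R by (intro mult_strict_left_mono) auto
      finally show ?thesis by simp
    qed
    obtain p where p: "p \<in> spanP a" "\<forall>t\<in>{0..pi}. \<bar>u t - p (cos t)\<bar> \<le> d"
      using approx[OF d] by blast
    obtain K c where Kc: "\<forall>m\<ge>K. c m = 0" "\<forall>x. p x = (\<Sum>m<K. c m * Pj a m x)"
      using spanP_repr[OF p(1)] by blast
    show "\<exists>no. \<forall>n\<ge>no. norm ((\<Sum>m<n. (ip a u (ee a m))^2 / cc a m) - ip a u u) < e"
    proof (intro exI allI impI)
      fix n assume n: "K \<le> n"
      have pn: "p (cos t) = (\<Sum>m<n. c m * ee a m t)" for t
        using Kc sum_pad[of K c n "\<lambda>m. Pj a m (cos t)"] n by (simp add: ee_def)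
      have cq: "continuous_on {0..pi} (\<lambda>t. u t - (\<Sum>m<n. c m * ee a m t))"
        by (intro continuous_intros uc)
      have "ip a (w n) (w n) \<le> ip a (\<lambda>t. u t - (\<Sum>m<n. c m * ee a m t)) (\<lambda>t. u t - (\<Sum>m<n. c m * ee a m t))"
        by (rule best)
      also have "\<dots> \<le> d^2 * R" unfolding R_def
        by (rule ip_bound[OF cq]) (use p(2) pn in auto)
      finally have "ip a (w n) (w n) < e" using dR by simp
      then show "norm ((\<Sum>m<n. (ip a u (ee a m))^2 / cc a m) - ip a u u) < e"
        using ip_nonneg[of a "w n"] by (simp add: part)
    qed
  qed
qed

lemma ip_diff_diff:
  assumes "continuous_on {0..pi} x" "continuous_on {0..pi} y"
  shows "ip a (\<lambda>t. x t - y t) (\<lambda>t. x t - y t) = ip a x x - 2 * ip a x y + ip a y y"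
proof -
  have "((\<lambda>t. x t * x t * rho a t - 2 * (x t * y t * rho a t) + y t * y t * rho a t) has_integral
        (ip a x x - 2 * ip a x y + ip a y y)) {0..pi}"
    using assms by (intro has_integral_add has_integral_diff has_integral_mult_right ip_has_integral)
  then have "((\<lambda>t. (x t - y t) * (x t - y t) * rho a t) has_integral (ip a x x - 2 * ip a x y + ip a y y)) {0..pi}"
    by (simp add: algebra_simps)
  then show ?thesis unfolding ip_def by (rule integral_unique)
qed

lemma parseval:
  assumes a: "a = 1/2 \<or> a = -1/2" and uc: "continuous_on {0..pi} u" and vc: "continuous_on {0..pi} v"
    and au: "\<And>e. e > 0 \<Longrightarrow> \<exists>p\<in>spanP a. \<forall>t\<in>{0..pi}. \<bar>u t - p (cos t)\<bar> \<le> e"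
    and av: "\<And>e. e > 0 \<Longrightarrow> \<exists>p\<in>spanP a. \<forall>t\<in>{0..pi}. \<bar>v t - p (cos t)\<bar> \<le> e"
  shows "((\<lambda>m. ip a u (ee a m) * ip a v (ee a m) / cc a m) has_sum ip a u v) UNIV"
proof -
  have ce: "continuous_on {0..pi} (ee a m)" for m by (intro continuous_intros)
  have apl: "\<exists>p\<in>spanP a. \<forall>t\<in>{0..pi}. \<bar>(u t + v t) - p (cos t)\<bar> \<le> e" if e: "e > 0" for e
  proof -
    obtain p1 where p1: "p1 \<in> spanP a" "\<forall>t\<in>{0..pi}. \<bar>u t - p1 (cos t)\<bar> \<le> e/2" using au[of "e/2"] e by auto
    obtain p2 where p2: "p2 \<in> spanP a" "\<forall>t\<in>{0..pi}. \<bar>v t - p2 (cos t)\<bar> \<le> e/2" using av[of "e/2"] e by auto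
    show ?thesis
    proof (intro bexI ballI)
      show "(\<lambda>x. p1 x + p2 x) \<in> spanP a" by (rule spanP.add[OF p1(1) p2(1)])
      fix t assume t: "t \<in> {0..pi}"
      have "\<bar>u t - p1 (cos t)\<bar> \<le> e/2" "\<bar>v t - p2 (cos t)\<bar> \<le> e/2" using p1(2) p2(2) t by auto
      then show "\<bar>(u t + v t) - (p1 (cos t) + p2 (cos t))\<bar> \<le> e" by linarith
    qed
  qed
  have amn: "\<exists>p\<in>spanP a. \<forall>t\<in>{0..pi}. \<bar>(u t - v t) - p (cos t)\<bar> \<le> e" if e: "e > 0" for e
  proof -
    obtain p1 where p1: "p1 \<in> spanP a" "\<forall>t\<in>{0..pi}. \<bar>u t - p1 (cos t)\<bar> \<le> e/2" using au[of "e/2"] e by auto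
    obtain p2 where p2: "p2 \<in> spanP a" "\<forall>t\<in>{0..pi}. \<bar>v t - p2 (cos t)\<bar> \<le> e/2" using av[of "e/2"] e by auto
    show ?thesis
    proof (intro bexI ballI)
      show "(\<lambda>x. p1 x - p2 x) \<in> spanP a" by (rule spanP_diff[OF p1(1) p2(1)])
      fix t assume t: "t \<in> {0..pi}"
      have "\<bar>u t - p1 (cos t)\<bar> \<le> e/2" "\<bar>v t - p2 (cos t)\<bar> \<le> e/2" using p1(2) p2(2) t by auto
      then show "\<bar>(u t - v t) - (p1 (cos t) - p2 (cos t))\<bar> \<le> e" by linarith
    qed
  qed
  define A where "A m = ip a u (ee a m)" for m
  define B where "B m = ip a v (ee a m)" for m
  have P: "(\<lambda>m. (A m + B m)^2 / cc a m) sums (ip a u u + 2 * ip a u v + ip a v v)"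
    using parseval_norm[OF a _ apl] uc vc
    by (simp add: continuous_on_add ip_add_left[OF uc vc ce] ip_add_add[OF uc vc] A_def B_def)
  have M: "(\<lambda>m. (A m - B m)^2 / cc a m) sums (ip a u u - 2 * ip a u v + ip a v v)"
    using parseval_norm[OF a _ amn] uc vc
    by (simp add: continuous_on_diff ip_diff_left[OF uc vc ce] ip_diff_diff[OF uc vc] A_def B_def)
  have "(\<lambda>m. ((A m + B m)^2 / cc a m - (A m - B m)^2 / cc a m) / 4) sums
        (((ip a u u + 2 * ip a u v + ip a v v) - (ip a u u - 2 * ip a u v + ip a v v)) / 4)"
    by (intro sums_divide sums_diff P M)
  moreover have "((A m + B m)^2 / cc a m - (A m - B m)^2 / cc a m) / 4 = A m * B m / cc a m" for m
    using cc_pos[of a m] by (simp add: power2_eq_square field_simps)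
  ultimately have S: "(\<lambda>m. A m * B m / cc a m) sums ip a u v" by simp
  have NA: "summable (\<lambda>m. (A m)^2 / cc a m)" using parseval_norm[OF a uc au] unfolding A_def by (rule sums_summable)
  have NB: "summable (\<lambda>m. (B m)^2 / cc a m)" using parseval_norm[OF a vc av] unfolding B_def by (rule sums_summable)
  have "summable (\<lambda>m. norm (A m * B m / cc a m))"
  proof (rule summable_comparison_test'[OF summable_add[OF NA NB]])
    fix m :: nat
    have c: "cc a m > 0" by (rule cc_pos)
    have "\<bar>A m * B m\<bar> \<le> (A m)^2 + (B m)^2"
    proof -
      have "2 * \<bar>A m\<bar> * \<bar>B m\<bar> \<le> \<bar>A m\<bar>^2 + \<bar>B m\<bar>^2" by (rule sum_squares_bound)
      moreover have "(A m)^2 \<ge> 0" "(B m)^2 \<ge> 0" by auto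
      moreover have "\<bar>A m\<bar> * \<bar>B m\<bar> \<ge> 0" by simp
      moreover have "\<bar>A m\<bar>^2 = (A m)^2" "\<bar>B m\<bar>^2 = (B m)^2" by simp_all
      ultimately show ?thesis unfolding abs_mult by linarith
    qed
    then have "\<bar>A m * B m\<bar> / cc a m \<le> ((A m)^2 + (B m)^2) / cc a m"
      using c by (intro divide_right_mono) auto
    then show "norm (norm (A m * B m / cc a m)) \<le> (A m)^2 / cc a m + (B m)^2 / cc a m"
      using c by (simp add: abs_mult add_divide_distrib)
  qed
  then show ?thesis using norm_summable_imp_has_sum[OF _ S] unfolding A_def B_def by simp
qed


lemma C1_cont: "C1_on S F \<Longrightarrow> continuous_on S F"
  unfolding C1_on_def by (auto intro: DERIV_continuous_on)

lemma cont_cos_comp: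
  assumes "continuous_on {-1..1} G"
  shows "continuous_on {0..pi} (\<lambda>t. G (cos t))"
  by (rule continuous_on_compose2[OF assms]) (auto intro: continuous_intros simp: cos_image_0_pi[symmetric])

lemma approx_cos:
  assumes G: "continuous_on {-1..1} G" and e: "e > 0"
  shows "\<exists>p\<in>spanP a. \<forall>t\<in>{0..pi}. \<bar>G (cos t) - p (cos t)\<bar> \<le> e"
proof -
  obtain p where p: "p \<in> spanP a" "\<forall>x\<in>{-1..1}. \<bar>G x - p x\<bar> < e"
    using spanP_approx[OF G e] by blast
  show ?thesis
  proof (intro bexI ballI)
    fix t :: real assume "t \<in> {0..pi}"
    have "cos t \<in> {-1..1}" by auto
    then have "\<bar>G (cos t) - p (cos t)\<bar> < e" using p(2) by blast
    then show "\<bar>G (cos t) - p (cos t)\<bar> \<le> e" by simp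
  qed (rule p(1))
qed

lemma lint_to_ip:
  assumes a: "a = 1/2 \<or> a = -1/2" and G: "continuous_on {-1..1} G"
  shows "(LINT x:{-1..1}|lborel. G x * Jac a k x * weight a x) = ip a (\<lambda>t. G (cos t)) (ee a k)"
proof -
  have c: "continuous_on {-1..1} (\<lambda>x. G x * Jac a k x)"
    by (intro continuous_intros G continuous_Jac)
  have "(LINT x:{-1..1}|lborel. G x * Jac a k x * weight a x) =
        integral {0..pi} (\<lambda>t. G (cos t) * Jac a k (cos t) * rho a t)"
    by (rule subst_lemma(2)[OF a c])
  also have "\<dots> = ip a (\<lambda>t. G (cos t)) (ee a k)"
    unfolding ip_def ee_def
    by (rule arg_cong[of _ _ "integral {0..pi}"]) (auto simp: fun_eq_iff Jac_eq_Pj)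
  finally show ?thesis .
qed

lemma fcoef_ip:
  assumes a: "a = 1/2 \<or> a = -1/2" and F: "continuous_on {-1..1} F"
  shows "fcoef a N j F k = Wt a k / pi * ip a (\<lambda>t. cos t ^ (N - j) * F (cos t)) (ee a k)"
proof -
  have G: "continuous_on {-1..1} (\<lambda>x. x ^ (N - j) * F x)" by (intro continuous_intros F)
  show ?thesis unfolding fcoef_def using lint_to_ip[OF a G, of k] by simp
qed

lemma Icoef_ip:
  assumes a: "a = 1/2 \<or> a = -1/2" and \<phi>: "continuous_on {-1..1} \<phi>"
  shows "Icoef a \<phi> m l = Wt a l / pi * ip a (\<lambda>t. ee a l t * \<phi> (cos t)) (ee a m)"
proof -
  have G: "continuous_on {-1..1} (\<lambda>x. Jac a l x * \<phi> x)" by (intro continuous_intros \<phi> continuous_Jac)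
  have "(LINT x:{-1..1}|lborel. Jac a l x * Jac a m x * \<phi> x * weight a x) =
        (LINT x:{-1..1}|lborel. (Jac a l x * \<phi> x) * Jac a m x * weight a x)"
    by (simp add: mult_ac)
  also have "\<dots> = ip a (\<lambda>t. Jac a l (cos t) * \<phi> (cos t)) (ee a m)"
    by (rule lint_to_ip[OF a G])
  also have "(\<lambda>t. Jac a l (cos t) * \<phi> (cos t)) = (\<lambda>t. ee a l t * \<phi> (cos t))"
    by (auto simp: fun_eq_iff ee_def Jac_eq_Pj)
  finally show ?thesis unfolding Icoef_def by simp
qed

lemma one_dim:
  assumes a: "a = 1/2 \<or> a = -1/2" and E: "continuous_on {-1..1} E" and \<phi>: "continuous_on {-1..1} \<phi>"
  shows "((\<lambda>m. Icoef a \<phi> m l * fcoef a N j E m) has_sum fcoef a N j (\<lambda>x. E x * \<phi> x) l) UNIV"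
proof -
  define H where "H x = Pj a l x * \<phi> x" for x
  define G where "G x = x ^ (N - j) * E x" for x
  have Hc: "continuous_on {-1..1} H" unfolding H_def by (intro continuous_intros \<phi> continuous_Pj)
  have Gc: "continuous_on {-1..1} G" unfolding G_def by (intro continuous_intros E)
  have P: "((\<lambda>m. ip a (\<lambda>t. H (cos t)) (ee a m) * ip a (\<lambda>t. G (cos t)) (ee a m) / cc a m) has_sum
            ip a (\<lambda>t. H (cos t)) (\<lambda>t. G (cos t))) UNIV"
    by (rule parseval[OF a cont_cos_comp[OF Hc] cont_cos_comp[OF Gc] approx_cos[OF Hc] approx_cos[OF Gc]])
  have eq1: "Icoef a \<phi> m l * fcoef a N j E m =
      Wt a l / pi * (ip a (\<lambda>t. H (cos t)) (ee a m) * ip a (\<lambda>t. G (cos t)) (ee a m) / cc a m)" for m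
  proof -
    have w: "Wt a m > 0" by (simp add: Wt_def)
    have "Icoef a \<phi> m l * fcoef a N j E m =
      (Wt a l / pi * ip a (\<lambda>t. H (cos t)) (ee a m)) * (Wt a m / pi * ip a (\<lambda>t. G (cos t)) (ee a m))"
      unfolding Icoef_ip[OF a \<phi>, of m l] fcoef_ip[OF a E, of N j m] H_def G_def ee_def by simp
    also have "\<dots> = Wt a l / pi * (ip a (\<lambda>t. H (cos t)) (ee a m) * ip a (\<lambda>t. G (cos t)) (ee a m) / cc a m)"
      using w by (simp add: cc_def field_simps)
    finally show ?thesis .
  qed
  have Ephi: "continuous_on {-1..1} (\<lambda>x. E x * \<phi> x)" by (intro continuous_intros E \<phi>)
  have eq2: "fcoef a N j (\<lambda>x. E x * \<phi> x) l = Wt a l / pi * ip a (\<lambda>t. H (cos t)) (\<lambda>t. G (cos t))"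
    unfolding fcoef_ip[OF a Ephi] ip_def ee_def H_def G_def
    by (rule arg_cong[of _ _ "\<lambda>z. Wt a l / pi * z"], rule arg_cong[of _ _ "integral {0..pi}"])
       (auto simp: fun_eq_iff mult_ac)
  show ?thesis unfolding eq1 eq2 by (rule has_sum_cmult_right[OF P])
qed


lemma detN_cong:
  assumes "\<And>i j. i \<in> {1..N} \<Longrightarrow> j \<in> {1..N} \<Longrightarrow> M i j = M' i j"
  shows "detN N M = detN N M'"
  unfolding detN_def
proof (rule sum.cong[OF refl])
  fix p assume "p \<in> {p. p permutes {1..N}}"
  then have p: "p permutes {1..N}" by simp
  show "of_int (sign p) * (\<Prod>i = 1..N. M i (p i)) = of_int (sign p) * (\<Prod>i = 1..N. M' i (p i))"
    using assms permutes_in_image[OF p] by (auto intro!: prod.cong)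
qed

lemma perm_permutation: "p permutes {1..(N::nat)} \<Longrightarrow> permutation p"
  using permutation_permutes by blast

lemma detN_permute_rows:
  assumes t: "t permutes {1..N}"
  shows "detN N (\<lambda>i j. M (t i) j) = of_int (sign t) * detN N M"
proof -
  let ?U = "{1..N}"
  let ?PU = "{p. p permutes ?U}"
  have *: "(\<Sum>q\<in>?PU. of_int (sign (q \<circ> t)) * (\<Prod>i\<in>?U. M (t i) ((q \<circ> t) i))) =
           (\<Sum>n\<in>?PU. of_int (sign t) * of_int (sign n) * (\<Prod>i\<in>?U. M i (n i)))"
  proof (rule sum.cong)
    fix q
    assume qPU: "q \<in> ?PU"
    then have q: "q permutes ?U" by blast
    have "prod (\<lambda>i. M (t i) ((q \<circ> t) i)) ?U = prod ((\<lambda>i. M (t i) ((q \<circ> t) i)) \<circ> inv t) ?U"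
      by (simp only: prod.permute[OF permutes_inv[OF t], symmetric])
    also have "\<dots> = prod (\<lambda>i. M ((t \<circ> inv t) i) ((q \<circ> (t \<circ> inv t)) i)) ?U"
      by (simp only: o_def)
    also have "\<dots> = prod (\<lambda>i. M i (q i)) ?U"
      by (simp only: o_def permutes_inverses[OF t])
    finally have thp: "prod (\<lambda>i. M (t i) ((q \<circ> t) i)) ?U = prod (\<lambda>i. M i (q i)) ?U" .
    show "of_int (sign (q \<circ> t)) * prod (\<lambda>i. M (t i) ((q \<circ> t) i)) ?U =
          of_int (sign t) * of_int (sign q) * prod (\<lambda>i. M i (q i)) ?U"
      by (simp only: thp sign_compose[OF perm_permutation[OF q] perm_permutation[OF t]] mult.commute of_int_mult)
  qed auto
  have "detN N (\<lambda>i j. M (t i) j) = (\<Sum>q\<in>?PU. of_int (sign q) * (\<Prod>i\<in>?U. M (t i) (q i)))"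
    unfolding detN_def by simp
  also have "\<dots> = (\<Sum>q\<in>?PU. of_int (sign (q \<circ> t)) * (\<Prod>i\<in>?U. M (t i) ((q \<circ> t) i)))"
    by (rule sum_permutations_compose_right[OF t])
  also have "\<dots> = (\<Sum>n\<in>?PU. of_int (sign t) * of_int (sign n) * (\<Prod>i\<in>?U. M i (n i)))"
    by (rule *)
  also have "\<dots> = of_int (sign t) * detN N M"
    unfolding detN_def by (simp add: sum_distrib_left mult.assoc)
  finally show ?thesis .
qed

lemma detN_transpose: "detN N (\<lambda>i j. M j i) = detN N M"
proof -
  let ?U = "{1..N}"
  have "of_int (sign (inv p)) * (\<Prod>i\<in>?U. M (inv p i) i) = of_int (sign p) * (\<Prod>i\<in>?U. M i (p i))"
    if p: "p \<in> {p. p permutes ?U}" for p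
  proof -
    from p have pU: "p permutes ?U" by blast
    have sth: "sign (inv p) = sign p"
      by (rule sign_inverse[OF perm_permutation[OF pU]])
    have pi: "inj_on p ?U" using permutes_inj[OF pU] by (blast intro: inj_on_subset)
    have "prod (\<lambda>i. M (inv p i) i) ?U = prod (\<lambda>i. M (inv p i) i) (p ` ?U)"
      using permutes_image[OF pU] by simp
    also have "\<dots> = prod ((\<lambda>i. M (inv p i) i) \<circ> p) ?U"
      unfolding prod.reindex[OF pi] ..
    also have "\<dots> = prod (\<lambda>i. M i (p i)) ?U"
      by (rule prod.cong) (auto simp: permutes_inverses(2)[OF pU])
    finally show ?thesis using sth by simp
  qed
  then show ?thesis
    unfolding detN_def
    by (subst sum_permutations_inverse) (blast intro: sum.cong)
qed

lemma detN_identical_rows: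
  assumes i: "i \<in> {1..N}" and k: "k \<in> {1..N}" and ik: "i \<noteq> k" and r: "\<And>j. M i j = M k j"
  shows "detN N M = 0"
proof -
  let ?t = "Transposition.transpose i k"
  have t: "?t permutes {1..N}" by (rule permutes_swap_id[OF i k])
  have "(\<lambda>i' j. M (?t i') j) = M"
    using r by (auto simp: fun_eq_iff Transposition.transpose_def)
  then have "detN N M = of_int (sign ?t) * detN N M"
    using detN_permute_rows[OF t, of M] by simp
  also have "\<dots> = - detN N M" using ik by (simp add: sign_swap_id)
  finally show ?thesis by simp
qed


lemma has_sum_finite_sum:
  fixes f :: "'a \<Rightarrow> 'b \<Rightarrow> real"
  assumes "finite I" "\<And>i. i \<in> I \<Longrightarrow> (f i has_sum s i) A"
  shows "((\<lambda>x. \<Sum>i\<in>I. f i x) has_sum (\<Sum>i\<in>I. s i)) A"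
  using assms
proof (induction I rule: finite_induct)
  case empty
  then show ?case by simp
next
  case (insert i I)
  have "((\<lambda>x. f i x + (\<Sum>i\<in>I. f i x)) has_sum (s i + (\<Sum>i\<in>I. s i))) A"
    by (rule has_sum_add) (use insert in auto)
  then show ?case using insert.hyps by simp
qed

lemma prod_PiE_summable:
  fixes f :: "'i \<Rightarrow> nat \<Rightarrow> real"
  assumes "finite A" "\<And>i. i \<in> A \<Longrightarrow> f i summable_on UNIV"
  shows "(\<lambda>k. \<Prod>i\<in>A. f i (k i)) summable_on PiE A (\<lambda>_. UNIV)"
  using assms
proof (induction A rule: finite_induct)
  case empty
  then show ?case by simp
next
  case (insert x F)
  define B :: "'i \<Rightarrow> nat set" where "B = (\<lambda>_. UNIV)"
  have pi: "Pi\<^sub>E (insert x F) B = (\<lambda>(g,y). g(x:=y)) ` (Pi\<^sub>E F B \<times> B x)"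
    unfolding PiE_insert_eq
    by (subst swap_product [symmetric]) (simp add: image_image case_prod_unfold)
  have inj: "inj_on (\<lambda>(g, y). g(x := y)) (Pi\<^sub>E F B \<times> B x)"
    using \<open>x \<notin> F\<close> by (rule inj_combinator')
  have IH: "(\<lambda>k. \<Prod>i\<in>F. f i (k i)) summable_on Pi\<^sub>E F B"
    using insert.IH insert.prems unfolding B_def by blast
  have fx: "(\<lambda>y. norm (f x y)) summable_on UNIV"
    using summable_on_iff_abs_summable_on_real[THEN iffD1, OF insert.prems[of x]] by simp
  have "(\<lambda>z. norm ((\<lambda>(p, y). f x y * (\<Prod>i\<in>F. f i (p i))) z)) summable_on Sigma (Pi\<^sub>E F B) (\<lambda>_. B x)"
  proof (rule iffD2[OF Infinite_Sum.abs_summable_on_Sigma_iff], intro conjI ballI)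
    fix p assume "p \<in> Pi\<^sub>E F B"
    show "(\<lambda>y. norm (case (p, y) of (p, y) \<Rightarrow> f x y * (\<Prod>i\<in>F. f i (p i)))) summable_on B x"
      using summable_on_cmult_left[OF fx, of "\<bar>\<Prod>i\<in>F. f i (p i)\<bar>"]
      by (simp add: B_def abs_mult)
  next
    have "(\<lambda>p. infsum (\<lambda>y. norm (f x y)) UNIV * norm (\<Prod>i\<in>F. f i (p i))) summable_on Pi\<^sub>E F B"
    proof (intro summable_on_cmult_right)
      show "(\<lambda>p. norm (\<Prod>i\<in>F. f i (p i))) summable_on Pi\<^sub>E F B"
        using summable_on_iff_abs_summable_on_real[THEN iffD1, OF IH] by simp
    qed
    moreover have "infsum (\<lambda>y. norm (case (p, y) of (p, y) \<Rightarrow> f x y * (\<Prod>i\<in>F. f i (p i)))) (B x)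
        = infsum (\<lambda>y. norm (f x y)) UNIV * norm (\<Prod>i\<in>F. f i (p i))" for p
      by (simp add: B_def abs_mult infsum_cmult_left')
    moreover have "infsum (\<lambda>y. norm (f x y)) UNIV \<ge> 0" by (rule infsum_nonneg) auto
    ultimately show "(\<lambda>p. norm (infsum (\<lambda>y. norm (case (p, y) of (p, y) \<Rightarrow> f x y * (\<Prod>i\<in>F. f i (p i)))) (B x)))
        summable_on Pi\<^sub>E F B"
      by (simp add: B_def abs_mult)
  qed
  then have s2: "(\<lambda>(p, y). f x y * (\<Prod>i\<in>F. f i (p i))) summable_on (Pi\<^sub>E F B \<times> B x)"
    by (rule summable_on_iff_abs_summable_on_real[THEN iffD2])
  have "((\<lambda>k. \<Prod>i\<in>insert x F. f i (k i)) \<circ> (\<lambda>(g,y). g(x:=y))) = (\<lambda>(p, y). f x y * (\<Prod>i\<in>F. f i (p i)))"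
  proof (rule ext, clarify)
    fix p :: "'i \<Rightarrow> nat" and y :: nat
    have "(\<Prod>i\<in>F. f i ((p(x:=y)) i)) = (\<Prod>i\<in>F. f i (p i))"
      using insert.hyps by (intro prod.cong) auto
    then show "((\<lambda>k. \<Prod>i\<in>insert x F. f i (k i)) \<circ> (\<lambda>(g,y). g(x:=y))) (p, y) = f x y * (\<Prod>i\<in>F. f i (p i))"
      using insert.hyps by simp
  qed
  then have "((\<lambda>k. \<Prod>i\<in>insert x F. f i (k i)) \<circ> (\<lambda>(g,y). g(x:=y))) summable_on (Pi\<^sub>E F B \<times> B x)"
    using s2 by simp
  then have "(\<lambda>k. \<Prod>i\<in>insert x F. f i (k i)) summable_on Pi\<^sub>E (insert x F) B"
    unfolding pi by (subst summable_on_reindex[OF inj])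
  then show ?case by (simp add: B_def)
qed

lemma prod_PiE_has_sum:
  fixes f :: "'i \<Rightarrow> nat \<Rightarrow> real"
  assumes "finite A" "\<And>i. i \<in> A \<Longrightarrow> (f i has_sum s i) UNIV"
  shows "((\<lambda>k. \<Prod>i\<in>A. f i (k i)) has_sum (\<Prod>i\<in>A. s i)) (PiE A (\<lambda>_. UNIV))"
proof -
  have sm: "f i summable_on UNIV" if "i \<in> A" for i using assms(2)[OF that] has_sum_imp_summable by blast
  have sm': "(\<lambda>y. norm (f i y)) summable_on UNIV" if "i \<in> A" for i
    using summable_on_iff_abs_summable_on_real[THEN iffD1, OF sm[OF that]] by simp
  have "infsum (\<lambda>k. \<Prod>i\<in>A. f i (k i)) (PiE A (\<lambda>_. UNIV)) = (\<Prod>i\<in>A. infsum (f i) UNIV)"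
    by (rule infsum_prod_PiE_abs[OF assms(1)]) (rule sm')
  also have "\<dots> = (\<Prod>i\<in>A. s i)" using assms(2) by (auto intro!: prod.cong infsumI)
  finally have eq: "infsum (\<lambda>k. \<Prod>i\<in>A. f i (k i)) (PiE A (\<lambda>_. UNIV)) = (\<Prod>i\<in>A. s i)" .
  have "((\<lambda>k. \<Prod>i\<in>A. f i (k i)) has_sum infsum (\<lambda>k. \<Prod>i\<in>A. f i (k i)) (PiE A (\<lambda>_. UNIV))) (PiE A (\<lambda>_. UNIV))"
    by (rule has_sum_infsum[OF prod_PiE_summable[OF assms(1) sm]])
  then show ?thesis unfolding eq .
qed


definition Dec :: "nat \<Rightarrow> (nat \<Rightarrow> nat) set" where
  "Dec N = {s \<in> PiE {1..N} (\<lambda>_. UNIV). \<forall>i\<in>{1..N}. \<forall>j\<in>{1..N}. i < j \<longrightarrow> s j < s i}"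

lemma Dec_less: "s \<in> Dec N \<Longrightarrow> i \<in> {1..N} \<Longrightarrow> j \<in> {1..N} \<Longrightarrow> i < j \<Longrightarrow> s j < s i"
  unfolding Dec_def by blast

lemma Dec_iff_less: "s \<in> Dec N \<Longrightarrow> i \<in> {1..N} \<Longrightarrow> j \<in> {1..N} \<Longrightarrow> s j < s i \<longleftrightarrow> i < j"
  by (metis Dec_less linorder_neqE_nat order_less_asym order_less_irrefl)

lemma Dec_inj: "s \<in> Dec N \<Longrightarrow> inj_on s {1..N}"
  unfolding inj_on_def by (metis Dec_less linorder_neqE_nat order_less_irrefl)

lemma Dec_card:
  assumes s: "s \<in> Dec N" and i: "i \<in> {1..N}"
  shows "card {y \<in> s ` {1..N}. y > s i} = i - 1"
proof -
  have "{y \<in> s ` {1..N}. y > s i} = s ` {1..<i}"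
  proof safe
    fix j assume j: "j \<in> {1..N}" "s j > s i"
    then have "j < i" using Dec_iff_less[OF s j(1) i] by simp
    then show "s j \<in> s ` {1..<i}" using j by auto
  next
    fix j assume j: "j \<in> {1..<i}"
    then show "s j \<in> s ` {1..N}" using i by auto
    show "s j > s i" using Dec_less[OF s, of j i] j i by auto
  qed
  moreover have "inj_on s {1..<i}" by (rule inj_on_subset[OF Dec_inj[OF s]]) (use i in auto)
  ultimately show ?thesis by (simp add: card_image)
qed

lemma Dec_unique:
  assumes s: "s \<in> Dec N" and s': "s' \<in> Dec N" and im: "s ` {1..N} = s' ` {1..N}"
  shows "s = s'"
proof (rule PiE_ext)
  show "s \<in> PiE {1..N} (\<lambda>_. UNIV)" "s' \<in> PiE {1..N} (\<lambda>_. UNIV)" using s s' by (auto simp: Dec_def)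
  fix i assume i: "i \<in> {1..N}"
  have "s' i \<in> s ` {1..N}" using im i by auto
  then obtain j where j: "j \<in> {1..N}" "s' i = s j" by auto
  have "i - 1 = card {y \<in> s' ` {1..N}. y > s' i}" using Dec_card[OF s' i] by simp
  also have "\<dots> = card {y \<in> s ` {1..N}. y > s j}" using im j by simp
  also have "\<dots> = j - 1" by (rule Dec_card[OF s j(1)])
  finally have "i = j" using i j by auto
  then show "s i = s' i" using j by simp
qed

lemma decomp_inj:
  "inj_on (\<lambda>(s, p). s \<circ> p) (Dec N \<times> {p. p permutes {1..N}})"
proof (rule inj_onI)
  fix x y assume x: "x \<in> Dec N \<times> {p. p permutes {1..N}}" and y: "y \<in> Dec N \<times> {p. p permutes {1..N}}"
    and eq0: "(\<lambda>(s, p). s \<circ> p) x = (\<lambda>(s, p). s \<circ> p) y"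
  obtain s p where xs: "x = (s, p)" by (cases x)
  obtain s' p' where ys: "y = (s', p')" by (cases y)
  have s: "s \<in> Dec N" and p: "p permutes {1..N}" and s': "s' \<in> Dec N" and p': "p' permutes {1..N}"
    using x y xs ys by auto
  have eq: "s \<circ> p = s' \<circ> p'" using eq0 xs ys by simp
  have "s ` {1..N} = (s \<circ> p) ` {1..N}" using permutes_image[OF p] by (metis image_comp)
  also have "\<dots> = (s' \<circ> p') ` {1..N}" using eq by simp
  also have "\<dots> = s' ` {1..N}" using permutes_image[OF p'] by (metis image_comp)
  finally have ss: "s = s'" by (rule Dec_unique[OF s s'])
  have "p = p'"
  proof (rule ext)
    fix i show "p i = p' i"
    proof (cases "i \<in> {1..N}")
      case True
      have "s (p i) = s (p' i)" using eq ss by (metis comp_apply)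
      moreover have "p i \<in> {1..N}" "p' i \<in> {1..N}" using True permutes_in_image[OF p] permutes_in_image[OF p'] by auto
      ultimately show ?thesis using Dec_inj[OF s] by (auto dest: inj_onD)
    next
      case False
      then show ?thesis using permutes_not_in[OF p] permutes_not_in[OF p'] by simp
    qed
  qed
  then show "x = y" using ss xs ys by simp
qed

lemma decomp_image:
  "(\<lambda>(s, p). s \<circ> p) ` (Dec N \<times> {p. p permutes {1..N}}) = {k \<in> PiE {1..N} (\<lambda>_. UNIV). inj_on k {1..N}}"
proof (intro equalityI subsetI)
  fix k0 assume "k0 \<in> (\<lambda>(s, p). s \<circ> p) ` (Dec N \<times> {p. p permutes {1..N}})"
  then obtain s p where s: "s \<in> Dec N" and p: "p permutes {1..N}" and k0: "k0 = s \<circ> p" by auto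
  have P1: "s \<circ> p \<in> PiE {1..N} (\<lambda>_. UNIV)"
  proof -
    have "s \<in> extensional {1..N}" using s by (auto simp: Dec_def PiE_def)
    then have "(s \<circ> p) x = undefined" if "x \<notin> {1..N}" for x
      using that permutes_not_in[OF p that] by (simp add: extensional_def)
    then show ?thesis by (auto simp: PiE_def extensional_def)
  qed
  have P2: "inj_on (s \<circ> p) {1..N}"
    using Dec_inj[OF s] permutes_inj_on[OF p] permutes_image[OF p]
    by (intro comp_inj_on) auto
  show "k0 \<in> {k \<in> PiE {1..N} (\<lambda>_. UNIV). inj_on k {1..N}}" using P1 P2 k0 by simp
next
  fix k :: "nat \<Rightarrow> nat" assume "k \<in> {k \<in> PiE {1..N} (\<lambda>_. UNIV). inj_on k {1..N}}"
  then have k: "k \<in> PiE {1..N} (\<lambda>_. UNIV)" and ik: "inj_on k {1..N}" by auto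
  define I where "I = {1..N}"
  define r where "r i = card {j \<in> I. k j > k i} + 1" for i
  define p where "p i = (if i \<in> I then r i else i)" for i
  have rlt: "r i < r i'" if "i \<in> I" "i' \<in> I" "k i > k i'" for i i'
  proof -
    have "{j \<in> I. k j > k i} \<subset> {j \<in> I. k j > k i'}" using that by auto
    then have "card {j \<in> I. k j > k i} < card {j \<in> I. k j > k i'}"
      by (rule psubset_card_mono[rotated]) (auto simp: I_def)
    then show ?thesis by (simp add: r_def)
  qed
  have rI: "r i \<in> I" if "i \<in> I" for i
  proof -
    have "{j \<in> I. k j > k i} \<subseteq> I - {i}" by auto
    then have "card {j \<in> I. k j > k i} \<le> card (I - {i})" by (intro card_mono) (auto simp: I_def)
    also have "\<dots> = N - 1" using that by (simp add: I_def)
    finally show ?thesis using that by (auto simp: r_def I_def)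
  qed
  have kneq: "k i \<noteq> k i'" if "i \<in> I" "i' \<in> I" "i \<noteq> i'" for i i'
    using ik that unfolding I_def by (auto dest: inj_onD)
  have injr: "inj_on p I"
  proof (rule inj_onI)
    fix i i' assume ii: "i \<in> I" "i' \<in> I" "p i = p i'"
    show "i = i'"
    proof (rule ccontr)
      assume "i \<noteq> i'"
      then have "k i < k i' \<or> k i' < k i" using kneq[OF ii(1,2)] by auto
      then show False using rlt[OF ii(1,2)] rlt[OF ii(2,1)] ii by (auto simp: p_def)
    qed
  qed
  have pI: "p ` I = I"
    by (rule endo_inj_surj) (use rI injr in \<open>auto simp: I_def p_def\<close>)
  have pp: "p permutes {1..N}"
    by (rule bij_imp_permutes) (use injr pI in \<open>auto simp: bij_betw_def p_def I_def\<close>)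
  define s where "s j = (if j \<in> I then k (inv_into I p j) else undefined)" for j
  have sp: "s \<circ> p = k"
  proof
    fix i show "(s \<circ> p) i = k i"
    proof (cases "i \<in> I")
      case True
      then have "p i \<in> I" using pI by auto
      then show ?thesis using True injr by (simp add: s_def inv_into_f_f)
    next
      case False
      have "(s \<circ> p) i = undefined" using False by (simp add: p_def s_def)
      moreover have "k i = undefined" using k False by (auto simp: PiE_def extensional_def I_def)
      ultimately show ?thesis by simp
    qed
  qed
  have sD: "s \<in> Dec N"
    unfolding Dec_def
  proof (intro CollectI conjI ballI impI)
    show "s \<in> PiE {1..N} (\<lambda>_. UNIV)" by (auto simp: s_def I_def PiE_def extensional_def)
    fix j j' assume j: "j \<in> {1..N}" "j' \<in> {1..N}" "j < j'"
    define i where "i = inv_into I p j"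
    define i' where "i' = inv_into I p j'"
    have ii: "i \<in> I" "i' \<in> I" "p i = j" "p i' = j'"
      using j pI unfolding i_def i'_def I_def
      by (auto intro: inv_into_into f_inv_into_f simp del: atLeastAtMost_iff)
    have "s j = k i" "s j' = k i'" using j by (simp_all add: s_def i_def i'_def I_def)
    moreover have "k i' < k i"
    proof (rule ccontr)
      assume "\<not> k i' < k i"
      moreover have "i \<noteq> i'" using ii j by auto
      ultimately have "k i < k i'" using kneq[OF ii(1,2)] by auto
      then have "r i' < r i" using rlt[OF ii(2,1)] by simp
      then show False using ii j by (simp add: p_def)
    qed
    ultimately show "s j' < s j" by simp
  qed
  show "k \<in> (\<lambda>(s, p). s \<circ> p) ` (Dec N \<times> {p. p permutes {1..N}})"
    using sD pp sp by (intro image_eqI[of _ _ "(s, p)"]) auto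
qed


lemma CB:
  fixes X Y Z :: "nat \<Rightarrow> nat \<Rightarrow> real"
  assumes h: "\<And>i j. i \<in> {1..N} \<Longrightarrow> j \<in> {1..N} \<Longrightarrow> ((\<lambda>m. X i m * Y j m) has_sum Z i j) UNIV"
  shows "((\<lambda>s. detN N (\<lambda>i j. X j (s i)) * detN N (\<lambda>i j. Y j (s i))) has_sum detN N Z) (Dec N)"
proof -
  define I where "I = {1..N}"
  define PI where "PI = PiE I (\<lambda>_. UNIV :: nat set)"
  define Perm where "Perm = {p. p permutes I}"
  have finPerm: "finite Perm" unfolding Perm_def I_def by (rule finite_permutations) simp
  define H where "H k = (\<Sum>p\<in>Perm. of_int (sign p) * (\<Prod>i\<in>I. X i (k i) * Y (p i) (k i)))" for k
  have H1: "(H has_sum detN N Z) PI"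
  proof -
    have "((\<lambda>k. \<Sum>p\<in>Perm. of_int (sign p) * (\<Prod>i\<in>I. X i (k i) * Y (p i) (k i))) has_sum
           (\<Sum>p\<in>Perm. of_int (sign p) * (\<Prod>i\<in>I. Z i (p i)))) PI"
    proof (rule has_sum_finite_sum[OF finPerm])
      fix p assume p: "p \<in> Perm"
      have "((\<lambda>k. \<Prod>i\<in>I. X i (k i) * Y (p i) (k i)) has_sum (\<Prod>i\<in>I. Z i (p i))) PI"
        unfolding PI_def
      proof (rule prod_PiE_has_sum)
        show "finite I" by (simp add: I_def)
        fix i assume i: "i \<in> I"
        have "p permutes I" using p by (simp add: Perm_def)
        then have "p i \<in> I" using i by (simp add: permutes_in_image)
        then show "((\<lambda>m. X i m * Y (p i) m) has_sum Z i (p i)) UNIV" using h i by (simp add: I_def)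
      qed
      then show "((\<lambda>k. of_int (sign p) * (\<Prod>i\<in>I. X i (k i) * Y (p i) (k i))) has_sum
                  of_int (sign p) * (\<Prod>i\<in>I. Z i (p i))) PI"
        by (rule has_sum_cmult_right)
    qed
    moreover have "(\<Sum>p\<in>Perm. of_int (sign p) * (\<Prod>i\<in>I. Z i (p i))) = detN N Z"
      by (simp add: detN_def Perm_def I_def)
    ultimately show ?thesis unfolding H_def by simp
  qed
  have H2: "H k = (\<Prod>i\<in>I. X i (k i)) * detN N (\<lambda>i j. Y j (k i))" for k
    by (simp add: H_def detN_def Perm_def I_def prod.distrib sum_distrib_left mult_ac)
  define Inj where "Inj = {k \<in> PI. inj_on k I}"
  have H3: "(H has_sum detN N Z) Inj"
  proof -
    have "(H has_sum detN N Z) PI \<longleftrightarrow> (H has_sum detN N Z) Inj"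
    proof (rule has_sum_cong_neutral)
      fix k assume k: "k \<in> PI - Inj"
      then obtain i i' where ii: "i \<in> I" "i' \<in> I" "i \<noteq> i'" "k i = k i'"
        by (auto simp: Inj_def inj_on_def)
      have "detN N (\<lambda>i j. Y j (k i)) = 0"
        by (rule detN_identical_rows[of i N i']) (use ii in \<open>auto simp: I_def\<close>)
      then show "H k = 0" by (simp add: H2)
    qed (auto simp: Inj_def)
    then show ?thesis using H1 by simp
  qed
  have img: "Inj = (\<lambda>(s, p). s \<circ> p) ` (Dec N \<times> Perm)"
    using decomp_image[of N] by (simp add: Inj_def PI_def I_def Perm_def)
  have "((H \<circ> (\<lambda>(s, p). s \<circ> p)) has_sum detN N Z) (Dec N \<times> Perm)"
    using H3 unfolding img by (subst (asm) has_sum_reindex) (use decomp_inj[of N] in \<open>simp_all add: Perm_def I_def\<close>)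
  then have H4: "((\<lambda>(s, p). H (s \<circ> p)) has_sum detN N Z) (Sigma (Dec N) (\<lambda>_. Perm))"
    by (simp add: case_prod_unfold o_def)
  have H5: "((\<lambda>s. \<Sum>p\<in>Perm. H (s \<circ> p)) has_sum detN N Z) (Dec N)"
    by (rule has_sum_Sigma'[OF H4]) (simp add: finPerm)
  have H6: "(\<Sum>p\<in>Perm. H (s \<circ> p)) = detN N (\<lambda>i j. X j (s i)) * detN N (\<lambda>i j. Y j (s i))" for s
  proof -
    have "H (s \<circ> p) = (of_int (sign p) * (\<Prod>i\<in>I. X i (s (p i)))) * detN N (\<lambda>i j. Y j (s i))"
      if p: "p \<in> Perm" for p
    proof -
      have "detN N (\<lambda>i j. Y j ((s \<circ> p) i)) = of_int (sign p) * detN N (\<lambda>i j. Y j (s i))"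
        using detN_permute_rows[of p N "\<lambda>i j. Y j (s i)"] p by (simp add: Perm_def I_def)
      then show ?thesis by (simp add: H2)
    qed
    then have "(\<Sum>p\<in>Perm. H (s \<circ> p)) =
        (\<Sum>p\<in>Perm. of_int (sign p) * (\<Prod>i\<in>I. X i (s (p i)))) * detN N (\<lambda>i j. Y j (s i))"
      by (simp add: sum_distrib_right)
    also have "(\<Sum>p\<in>Perm. of_int (sign p) * (\<Prod>i\<in>I. X i (s (p i)))) = detN N (\<lambda>i j. X i (s j))"
      by (simp add: detN_def Perm_def I_def)
    also have "\<dots> = detN N (\<lambda>i j. X j (s i))"
      using detN_transpose[of N "\<lambda>i j. X j (s i)"] by simp
    finally show ?thesis .
  qed
  show ?thesis using H5 unfolding H6 .
qed


definition hJ :: "nat \<Rightarrow> nat list \<Rightarrow> nat \<Rightarrow> nat" where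
  "hJ N mu = (\<lambda>i. if i \<in> {1..N} then mu ! (i - 1) + N - i else undefined)"

lemma JN_mono:
  assumes "mu \<in> JN N" "1 \<le> i" "i < j" "j \<le> N"
  shows "mu ! (j - 1) \<le> mu ! (i - 1)"
proof -
  have "sorted_wrt (\<ge>) mu" "length mu = N" using assms(1) by (auto simp: JN_def)
  then show ?thesis using assms(2-4) by (auto simp: sorted_wrt_iff_nth_less)
qed

lemma Dec_bound:
  assumes s: "s \<in> Dec N" and i: "1 \<le> i" and ij: "i \<le> j" and j: "j \<le> N"
  shows "s j + (j - i) \<le> s i"
  using ij j
proof (induction j rule: dec_induct)
  case base then show ?case by simp
next
  case (step n)
  have "s (Suc n) < s n" using Dec_less[OF s, of n "Suc n"] step i by auto
  then show ?case using step by auto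
qed

lemma hJ_inj: "inj_on (hJ N) (JN N)"
proof (rule inj_onI)
  fix mu mu' assume mu: "mu \<in> JN N" and mu': "mu' \<in> JN N" and eq: "hJ N mu = hJ N mu'"
  show "mu = mu'"
  proof (rule nth_equalityI)
    show "length mu = length mu'" using mu mu' by (simp add: JN_def)
    fix k assume "k < length mu"
    then have k: "k < N" using mu by (simp add: JN_def)
    have "hJ N mu (Suc k) = hJ N mu' (Suc k)" using eq by simp
    then show "mu ! k = mu' ! k" using k by (simp add: hJ_def)
  qed
qed

lemma hJ_image: "hJ N ` JN N = Dec N"
proof (intro equalityI subsetI)
  fix s assume "s \<in> hJ N ` JN N"
  then obtain mu where mu: "mu \<in> JN N" and s: "s = hJ N mu" by auto
  show "s \<in> Dec N" unfolding Dec_def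
  proof (intro CollectI conjI ballI impI)
    show "s \<in> PiE {1..N} (\<lambda>_. UNIV)" by (auto simp: s hJ_def PiE_def extensional_def)
    fix i j assume i: "i \<in> {1..N}" and j: "j \<in> {1..N}" and ij: "i < j"
    have "mu ! (j - 1) \<le> mu ! (i - 1)" using JN_mono[OF mu, of i j] i j ij by auto
    then show "s j < s i" using i j ij by (simp add: s hJ_def)
  qed
next
  fix s assume s: "s \<in> Dec N"
  define mu where "mu = map (\<lambda>i. s i - (N - i)) [1..<N+1]"
  have bnd: "s i \<ge> N - i" if "i \<in> {1..N}" for i
    using Dec_bound[OF s, of i N] that by auto
  have len: "length mu = N" by (simp add: mu_def)
  have nth: "mu ! k = s (Suc k) - (N - Suc k)" if "k < N" for k
    using that by (simp add: mu_def del: upt_Suc)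
  have "mu \<in> JN N"
    unfolding JN_def
  proof (intro CollectI conjI)
    show "length mu = N" by (rule len)
    show "sorted_wrt (\<ge>) mu"
      unfolding sorted_wrt_iff_nth_less
    proof (intro allI impI)
      fix a b assume ab: "a < b" "b < length mu"
      have "s (Suc b) + (Suc b - Suc a) \<le> s (Suc a)"
        using Dec_bound[OF s, of "Suc a" "Suc b"] ab len by auto
      moreover have "s (Suc b) \<ge> N - Suc b" using bnd[of "Suc b"] ab len by auto
      ultimately show "mu ! b \<le> mu ! a" using ab len nth[of a] nth[of b] by auto
    qed
  qed
  moreover have "hJ N mu = s"
  proof (rule PiE_ext)
    show "hJ N mu \<in> PiE {1..N} (\<lambda>_. UNIV)" by (auto simp: hJ_def PiE_def extensional_def)
    show "s \<in> PiE {1..N} (\<lambda>_. UNIV)" using s by (simp add: Dec_def)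
    fix i assume i: "i \<in> {1..N}"
    then have "mu ! (i - 1) = s i - (N - i)" using nth[of "i - 1"] by auto
    then show "hJ N mu i = s i" using i bnd[OF i] by (simp add: hJ_def)
  qed
  ultimately show "s \<in> hJ N ` JN N" by force
qed

lemma dimSO_pos:
  assumes a: "a = 1/2 \<or> a = -1/2" and mu: "mu \<in> JN N"
  shows "dimSO a N mu > 0"
proof -
  have mono: "real (mu ! (j - 1)) \<le> real (mu ! (i - 1))" if "i \<in> {1..N}" "j \<in> {i<..N}" for i j
    using JN_mono[OF mu, of i j] that by auto
  from a show ?thesis
  proof
    assume a: "a = 1/2"
    define l where "l i = real (mu ! (i - 1)) + real N - real i + 1/2" for i
    define m where "m i = real N - real i + 1/2" for i :: nat
    have lpos: "l i > 0" "m i > 0" if "i \<in> {1..N}" for i using that by (auto simp: l_def m_def)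
    have f1: "(l i ^ 2 - l j ^ 2) / (m i ^ 2 - m j ^ 2) > 0" if "i \<in> {1..N}" "j \<in> {i<..N}" for i j
    proof -
      have lj: "l j > 0" "m j > 0" using lpos[of j] that by auto
      have "l i > l j" "m i > m j" using mono[OF that] that by (auto simp: l_def m_def)
      then have "l i ^ 2 > l j ^ 2" "m i ^ 2 > m j ^ 2" using lj by (auto intro!: power_strict_mono)
      then show ?thesis by simp
    qed
    have "(\<Prod>i\<in>{1..N}. \<Prod>j\<in>{i<..N}. (l i ^ 2 - l j ^ 2) / (m i ^ 2 - m j ^ 2)) > 0"
      using f1 by (intro prod_pos) auto
    moreover have "(\<Prod>i\<in>{1..N}. l i / m i) > 0" using lpos by (intro prod_pos) auto
    ultimately show ?thesis unfolding dimSO_def a by (simp add: Let_def l_def m_def)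
  next
    assume a: "a = -1/2"
    define l where "l i = real (mu ! (i - 1)) + real N - real i" for i
    define m where "m i = real N - real i" for i :: nat
    have f1: "(l i ^ 2 - l j ^ 2) / (m i ^ 2 - m j ^ 2) > 0" if "i \<in> {1..N}" "j \<in> {i<..N}" for i j
    proof -
      have lj: "l j \<ge> 0" "m j \<ge> 0" using that by (auto simp: l_def m_def)
      have "l i > l j" "m i > m j" using mono[OF that] that by (auto simp: l_def m_def)
      then have "l i ^ 2 > l j ^ 2" "m i ^ 2 > m j ^ 2" using lj by (auto intro!: power_strict_mono)
      then show ?thesis by simp
    qed
    have "(\<Prod>i\<in>{1..N}. \<Prod>j\<in>{i<..N}. (l i ^ 2 - l j ^ 2) / (m i ^ 2 - m j ^ 2)) > 0"
      using f1 by (intro prod_pos) auto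
    then show ?thesis unfolding dimSO_def a by (simp add: Let_def l_def m_def)
  qed
qed


theorem proposition3p1:
  fixes N :: nat and a :: real and E \<phi> :: "real \<Rightarrow> real" and lam :: "nat list"
  assumes "N \<ge> 1"
    and "a = 1/2 \<or> a = -1/2"
    and "C1_on {-1..1} E" and "C1_on {-1..1} \<phi>"
    and "lam \<in> JN N"
  shows "((\<lambda>\<mu>. detN N (\<lambda>i j. Icoef a \<phi> (\<mu> ! (i - 1) + N - i) (lam ! (j - 1) + N - j))
                * (PNa a N E \<mu> / dimSO a N \<mu>))
          has_sum (PtildeNa a N E \<phi> lam / dimSO a N lam)) (JN N)"
proof -
  note a = assms(2)
  have Ec: "continuous_on {-1..1} E" by (rule C1_cont[OF assms(3)])
  have pc: "continuous_on {-1..1} \<phi>" by (rule C1_cont[OF assms(4)])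
  define X where "X i m = Icoef a \<phi> m (lam ! (i - 1) + N - i)" for i m
  define Y where "Y j m = fcoef a N j E m" for j m
  define Z where "Z i j = fcoef a N j (\<lambda>x. E x * \<phi> x) (lam ! (i - 1) + N - i)" for i j
  have h: "((\<lambda>m. X i m * Y j m) has_sum Z i j) UNIV" for i j
    unfolding X_def Y_def Z_def by (rule one_dim[OF a Ec pc])
  have cb: "((\<lambda>s. CNa a N * (detN N (\<lambda>i j. X j (s i)) * detN N (\<lambda>i j. Y j (s i)))) has_sum
            CNa a N * detN N Z) (Dec N)"
    by (rule has_sum_cmult_right[OF CB[OF h]])
  then have cb2: "(((\<lambda>s. CNa a N * (detN N (\<lambda>i j. X j (s i)) * detN N (\<lambda>i j. Y j (s i)))) \<circ> hJ N)
      has_sum CNa a N * detN N Z) (JN N)"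
    unfolding hJ_image[symmetric] by (subst (asm) has_sum_reindex[OF hJ_inj])
  have eqf: "((\<lambda>s. CNa a N * (detN N (\<lambda>i j. X j (s i)) * detN N (\<lambda>i j. Y j (s i)))) \<circ> hJ N) mu =
      detN N (\<lambda>i j. Icoef a \<phi> (mu ! (i - 1) + N - i) (lam ! (j - 1) + N - j)) * (PNa a N E mu / dimSO a N mu)"
    if mu: "mu \<in> JN N" for mu
  proof -
    have d: "dimSO a N mu \<noteq> 0" using dimSO_pos[OF a mu] by simp
    have 1: "detN N (\<lambda>i j. X j (hJ N mu i)) = detN N (\<lambda>i j. Icoef a \<phi> (mu ! (i - 1) + N - i) (lam ! (j - 1) + N - j))"
      by (rule detN_cong) (simp add: X_def hJ_def)
    have 2: "detN N (\<lambda>i j. Y j (hJ N mu i)) = detN N (\<lambda>i j. fcoef a N j E (mu ! (i - 1) + N - i))"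
      by (rule detN_cong) (simp add: Y_def hJ_def)
    show ?thesis using d by (simp add: 1 2 PNa_def)
  qed
  have eqs: "CNa a N * detN N Z = PtildeNa a N E \<phi> lam / dimSO a N lam"
  proof -
    have d: "dimSO a N lam \<noteq> 0" using dimSO_pos[OF a assms(5)] by simp
    have "Z = (\<lambda>i j. fcoef a N j (\<lambda>x. E x * \<phi> x) (lam ! (i - 1) + N - i))"
      by (simp add: fun_eq_iff Z_def)
    then show ?thesis using d by (simp add: PtildeNa_def PNa_def)
  qed
  show ?thesis
    using cb2 unfolding eqs by (subst (asm) has_sum_cong[OF eqf]) auto
qed


end
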